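(* Let $a,b\in\mathbb{Q}$ be such that $f(x)=x^{12}+ax^6+b$ is irreducible over $\mathbb{Q}$. Let $G_4$ be the Galois group of $g_4(x)=x^4+ax^2+b$ and $G_6$ the Galois group of $g_6(x)=x^6+ax^3+b$ over $\mathbb{Q}$. Then: (1) $\mathrm{disc}(f)\in\mathbb{Q}^2$ if and only if $G_4$ is $4T2$; (2) $|\mathrm{Gal}(f)|\le \min\{18|G_4|,\,4|G_6|\}$.
   Context: $\mathbb{Q}^2$ is the set of squares of rational numbers; $\mathrm{disc}(f)$ is the discriminant of $f$. Galois groups are regarded as transitive permutation groups on the roots up to conjugacy; $nTj$ denotes the $j$-th conjugacy class of transitive subgroups of $S_n$ in the Butler–McKay numbering. ($4T2$ is the Klein four-group $V_4\le S_4$.) *)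

theory Defs
  imports Complex_Main "HOL-Computational_Algebra.Computational_Algebra"
begin

definition croots :: "rat poly \<Rightarrow> complex set" where
  "croots p = {z. poly (map_poly of_rat p) z = 0}"

definition is_subfield :: "complex set \<Rightarrow> bool" where
  "is_subfield S \<longleftrightarrow> 0 \<in> S \<and> 1 \<in> S \<and>
     (\<forall>x\<in>S. \<forall>y\<in>S. x + y \<in> S \<and> x - y \<in> S \<and> x * y \<in> S) \<and>
     (\<forall>x\<in>S. x \<noteq> 0 \<longrightarrow> inverse x \<in> S)"

definition splitting_field :: "rat poly \<Rightarrow> complex set" where
  "splitting_field p = \<Inter>{S. is_subfield S \<and> croots p \<subseteq> S}"

text \<open>Galois group of p over Q: field automorphisms of the splitting field
  (extended by the identity outside it, so that they are unique as HOL functions).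
  Automorphisms automatically fix Q.\<close>
definition galois_group :: "rat poly \<Rightarrow> (complex \<Rightarrow> complex) set" where
  "galois_group p = {\<sigma>. bij_betw \<sigma> (splitting_field p) (splitting_field p) \<and>
      (\<forall>x\<in>splitting_field p. \<forall>y\<in>splitting_field p.
          \<sigma> (x + y) = \<sigma> x + \<sigma> y \<and> \<sigma> (x * y) = \<sigma> x * \<sigma> y) \<and>
      (\<forall>x. x \<notin> splitting_field p \<longrightarrow> \<sigma> x = x)}"

definition perm4 :: "nat list \<Rightarrow> nat \<Rightarrow> nat" where
  "perm4 l = (\<lambda>i. if i < 4 then l ! i else i)"

definition klein4 :: "(nat \<Rightarrow> nat) set" where
  "klein4 = {perm4 [0,1,2,3], perm4 [1,0,3,2], perm4 [2,3,0,1], perm4 [3,2,1,0]}"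

text \<open>Gal(p) is 4T2: p has exactly four complex roots, and the permutation group
  induced by Gal(p) on them is conjugate (via a labelling of the roots by 0..3)
  to V4 in S4.\<close>
definition is_4T2 :: "rat poly \<Rightarrow> bool" where
  "is_4T2 p \<longleftrightarrow> card (croots p) = 4 \<and>
     (\<exists>\<phi>. bij_betw \<phi> {0..<4} (croots p) \<and>
        {restrict \<sigma> (croots p) | \<sigma>. \<sigma> \<in> galois_group p} =
        {restrict (\<phi> \<circ> \<pi> \<circ> the_inv_into {0..<4} \<phi>) (croots p) | \<pi>. \<pi> \<in> klein4})"

definition disc :: "rat poly \<Rightarrow> complex" where
  "disc p = (let rs = (SOME rs. map_poly of_rat p =
                   smult (of_rat (lead_coeff p)) (\<Prod>r\<leftarrow>rs. [:-r, 1:]));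
                 n = length rs
             in of_rat (lead_coeff p) ^ (2 * n - 2) *
                (\<Prod>i<n. \<Prod>j\<in>{i<..<n}. (rs ! i - rs ! j) ^ 2))"

end

theory Submission
  imports Defs "HOL-Computational_Algebra.Field_as_Ring"
begin


definition ev :: "rat poly \<Rightarrow> complex \<Rightarrow> complex" where
  "ev p x = poly (map_poly of_rat p) x"

lemma map_poly_of_rat_add: "map_poly (of_rat::rat\<Rightarrow>complex) (p + q) = map_poly of_rat p + map_poly of_rat q"
  by (rule poly_eqI) (simp add: coeff_map_poly of_rat_add)

lemma map_poly_of_rat_minus: "map_poly (of_rat::rat\<Rightarrow>complex) (- p) = - map_poly of_rat p"
  by (rule poly_eqI) (simp add: coeff_map_poly of_rat_minus)

lemma map_poly_of_rat_diff: "map_poly (of_rat::rat\<Rightarrow>complex) (p - q) = map_poly of_rat p - map_poly of_rat q"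
  by (rule poly_eqI) (simp add: coeff_map_poly of_rat_diff)

lemma map_poly_of_rat_mult: "map_poly (of_rat::rat\<Rightarrow>complex) (p * q) = map_poly of_rat p * map_poly of_rat q"
  by (rule poly_eqI) (simp add: coeff_map_poly coeff_mult of_rat_sum of_rat_mult)

lemma ev_add[simp]: "ev (p + q) x = ev p x + ev q x"
  by (simp add: ev_def map_poly_of_rat_add)
lemma ev_diff[simp]: "ev (p - q) x = ev p x - ev q x"
  by (simp add: ev_def map_poly_of_rat_diff)
lemma ev_minus[simp]: "ev (- p) x = - ev p x"
  by (simp add: ev_def map_poly_of_rat_minus)
lemma ev_mult[simp]: "ev (p * q) x = ev p x * ev q x"
  by (simp add: ev_def map_poly_of_rat_mult)
lemma ev_0[simp]: "ev 0 x = 0"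
  by (simp add: ev_def)
lemma ev_pCons: "ev (pCons c p) x = of_rat c + x * ev p x"
  by (cases "p = 0 \<and> c = 0") (auto simp: ev_def map_poly_pCons)
lemma ev_const[simp]: "ev [:c:] x = of_rat c"
  by (simp add: ev_pCons)
lemma ev_X[simp]: "ev [:0,1:] x = x"
  by (simp add: ev_pCons)
lemma ev_monom[simp]: "ev (monom c n) x = of_rat c * x ^ n"
  by (simp add: ev_def map_poly_monom poly_monom)
lemma ev_pcompose: "ev (pcompose p q) x = ev p (ev q x)"
  by (induction p) (auto simp: pcompose_pCons ev_pCons)
lemma croots_ev: "croots p = {z. ev p z = 0}"
  by (simp add: croots_def ev_def)

lemma ev_mod: assumes "ev g x = 0" shows "ev (p mod g) x = ev p x"
proof -
  have "p = (p div g) * g + p mod g" by simp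
  hence "ev p x = ev (p div g) x * ev g x + ev (p mod g) x" by (metis ev_add ev_mult)
  thus ?thesis using assms by simp
qed

lemma subfield_neg: "is_subfield S \<Longrightarrow> x \<in> S \<Longrightarrow> - x \<in> S"
  unfolding is_subfield_def by (metis diff_0)
lemma subfield_add: "is_subfield S \<Longrightarrow> x \<in> S \<Longrightarrow> y \<in> S \<Longrightarrow> x + y \<in> S"
  unfolding is_subfield_def by blast
lemma subfield_diff: "is_subfield S \<Longrightarrow> x \<in> S \<Longrightarrow> y \<in> S \<Longrightarrow> x - y \<in> S"
  unfolding is_subfield_def by blast
lemma subfield_mult: "is_subfield S \<Longrightarrow> x \<in> S \<Longrightarrow> y \<in> S \<Longrightarrow> x * y \<in> S"
  unfolding is_subfield_def by blast
lemma subfield_0: "is_subfield S \<Longrightarrow> 0 \<in> S"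
  unfolding is_subfield_def by blast
lemma subfield_1: "is_subfield S \<Longrightarrow> 1 \<in> S"
  unfolding is_subfield_def by blast
lemma subfield_inverse: "is_subfield S \<Longrightarrow> x \<in> S \<Longrightarrow> inverse x \<in> S"
  unfolding is_subfield_def by (metis inverse_zero)
lemma subfield_divide: "is_subfield S \<Longrightarrow> x \<in> S \<Longrightarrow> y \<in> S \<Longrightarrow> x / y \<in> S"
  by (simp add: divide_inverse subfield_mult subfield_inverse)
lemma subfield_power: "is_subfield S \<Longrightarrow> x \<in> S \<Longrightarrow> x ^ n \<in> S"
  by (induction n) (simp_all add: subfield_1 subfield_mult)
lemma subfield_of_nat: "is_subfield S \<Longrightarrow> of_nat n \<in> S"
  by (induction n) (simp_all add: subfield_0 subfield_1 subfield_add)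
lemma subfield_of_int: "is_subfield S \<Longrightarrow> of_int n \<in> S"
proof (cases "n \<ge> 0")
  case True thus "is_subfield S \<Longrightarrow> of_int n \<in> S" by (metis of_int_of_nat_eq nonneg_int_cases subfield_of_nat)
next
  case False
  hence "n = - int (nat (- n))" by simp
  thus "is_subfield S \<Longrightarrow> of_int n \<in> S" by (metis of_int_minus of_int_of_nat_eq subfield_of_nat subfield_neg)
qed
lemma subfield_of_rat: "is_subfield S \<Longrightarrow> of_rat q \<in> S"
proof -
  assume S: "is_subfield S"
  obtain a b where q: "q = Rat.Fract a b" and "b \<noteq> 0" by (cases q) auto
  hence "of_rat q = (of_int a / of_int b :: complex)" by (simp add: of_rat_rat)
  thus ?thesis using S by (simp add: subfield_divide subfield_of_int)
qed
lemma subfield_ev: "is_subfield S \<Longrightarrow> x \<in> S \<Longrightarrow> ev p x \<in> S"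
  by (induction p) (simp_all add: ev_pCons subfield_add subfield_mult subfield_of_rat subfield_0)

lemma subfield_UNIV: "is_subfield UNIV" by (simp add: is_subfield_def)

lemma subfield_Inter: "\<forall>S\<in>F. is_subfield S \<Longrightarrow> is_subfield (\<Inter>F)"
  unfolding is_subfield_def by blast

lemma SF_subfield: "is_subfield (splitting_field p)"
  unfolding splitting_field_def by (rule subfield_Inter) blast
lemma croots_SF: "croots p \<subseteq> splitting_field p"
  unfolding splitting_field_def by blast
lemma SF_min: "is_subfield S \<Longrightarrow> croots p \<subseteq> S \<Longrightarrow> splitting_field p \<subseteq> S"
  unfolding splitting_field_def by blast

definition fhom :: "(complex \<Rightarrow> complex) \<Rightarrow> complex set \<Rightarrow> bool" where
  "fhom \<sigma> S \<longleftrightarrow> is_subfield S \<and> inj_on \<sigma> S \<and>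
     (\<forall>x\<in>S. \<forall>y\<in>S. \<sigma> (x + y) = \<sigma> x + \<sigma> y \<and> \<sigma> (x * y) = \<sigma> x * \<sigma> y)"

context fixes \<sigma> S assumes h: "fhom \<sigma> S"
begin
lemma fh_sub: "is_subfield S" using h by (simp add: fhom_def)
lemma fh_inj: "inj_on \<sigma> S" using h by (simp add: fhom_def)
lemma fh_add: "x \<in> S \<Longrightarrow> y \<in> S \<Longrightarrow> \<sigma> (x + y) = \<sigma> x + \<sigma> y" using h by (simp add: fhom_def)
lemma fh_mult: "x \<in> S \<Longrightarrow> y \<in> S \<Longrightarrow> \<sigma> (x * y) = \<sigma> x * \<sigma> y" using h by (simp add: fhom_def)
lemma fh_0: "\<sigma> 0 = 0"
proof -
  have "\<sigma> (0 + 0) = \<sigma> 0 + \<sigma> 0" using fh_add subfield_0[OF fh_sub] by blast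
  thus ?thesis by simp
qed
lemma fh_1: "\<sigma> 1 = 1"
proof -
  have S0: "0 \<in> S" "1 \<in> S" using fh_sub subfield_0 subfield_1 by auto
  have "\<sigma> 1 \<noteq> \<sigma> 0" using fh_inj S0 by (metis inj_on_contraD zero_neq_one)
  hence ne: "\<sigma> 1 \<noteq> 0" by (simp add: fh_0)
  have "\<sigma> (1 * 1) = \<sigma> 1 * \<sigma> 1" using fh_mult S0 by blast
  hence "\<sigma> 1 * 1 = \<sigma> 1 * \<sigma> 1" by simp
  thus ?thesis using ne by (metis mult_left_cancel)
qed
lemma fh_neg: "x \<in> S \<Longrightarrow> \<sigma> (- x) = - \<sigma> x"
proof -
  assume x: "x \<in> S"
  have "\<sigma> (x + - x) = \<sigma> x + \<sigma> (- x)" using fh_add x subfield_neg[OF fh_sub x] by blast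
  thus ?thesis by (simp add: fh_0 eq_neg_iff_add_eq_0 add.commute)
qed
lemma fh_diff: "x \<in> S \<Longrightarrow> y \<in> S \<Longrightarrow> \<sigma> (x - y) = \<sigma> x - \<sigma> y"
  using fh_add[of x "- y"] fh_neg[of y] subfield_neg[OF fh_sub] by simp
lemma fh_inverse: "x \<in> S \<Longrightarrow> \<sigma> (inverse x) = inverse (\<sigma> x)"
proof (cases "x = 0")
  case True thus ?thesis by (simp add: fh_0)
next
  case False
  assume x: "x \<in> S"
  have "\<sigma> (x * inverse x) = \<sigma> x * \<sigma> (inverse x)" using fh_mult x subfield_inverse[OF fh_sub x] by blast
  hence "\<sigma> x * \<sigma> (inverse x) = 1" using False by (simp add: fh_1)
  thus ?thesis by (metis inverse_unique)
qed
lemma fh_divide: "x \<in> S \<Longrightarrow> y \<in> S \<Longrightarrow> \<sigma> (x / y) = \<sigma> x / \<sigma> y"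
  by (simp add: divide_inverse fh_mult fh_inverse subfield_inverse[OF fh_sub])
lemma fh_power: "x \<in> S \<Longrightarrow> \<sigma> (x ^ n) = \<sigma> x ^ n"
  by (induction n) (simp_all add: fh_1 fh_mult subfield_power[OF fh_sub])
lemma fh_of_nat: "\<sigma> (of_nat n) = of_nat n"
  by (induction n) (simp_all add: fh_0 fh_1 fh_add subfield_of_nat[OF fh_sub] subfield_1[OF fh_sub])
lemma fh_of_int: "\<sigma> (of_int n) = of_int n"
proof (cases "n \<ge> 0")
  case True thus ?thesis by (metis of_int_of_nat_eq nonneg_int_cases fh_of_nat)
next
  case False
  hence "n = - int (nat (- n))" by simp
  thus ?thesis by (metis of_int_minus of_int_of_nat_eq fh_of_nat fh_neg subfield_of_nat[OF fh_sub])
qed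
lemma fh_of_rat: "\<sigma> (of_rat q) = of_rat q"
proof -
  obtain a b where q: "q = Rat.Fract a b" and "b \<noteq> 0" by (cases q) auto
  hence "of_rat q = (of_int a / of_int b :: complex)" by (simp add: of_rat_rat)
  thus ?thesis by (simp add: fh_divide fh_of_int subfield_of_int[OF fh_sub])
qed
lemma fh_ev: "x \<in> S \<Longrightarrow> \<sigma> (ev p x) = ev p (\<sigma> x)"
proof (induction p)
  case 0 thus ?case by (simp add: ev_def fh_0)
next
  case (pCons a p)
  thus ?case using subfield_ev[OF fh_sub] subfield_of_rat[OF fh_sub]
    by (simp add: ev_pCons fh_add fh_mult fh_of_rat subfield_mult[OF fh_sub])
qed
end


lemma map_poly_of_rat_eq0: "map_poly (of_rat::rat\<Rightarrow>complex) p = 0 \<longleftrightarrow> p = 0"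
  by (metis map_poly_0 map_poly_eq_0_iff of_rat_eq_0_iff coeff_0 leading_coeff_0_iff)

lemma croots_finite: "p \<noteq> 0 \<Longrightarrow> finite (croots p)"
  unfolding croots_def by (rule poly_roots_finite) (simp add: map_poly_of_rat_eq0)

lemma gal_fhom: "\<sigma> \<in> galois_group p \<Longrightarrow> fhom \<sigma> (splitting_field p)"
  unfolding galois_group_def fhom_def using SF_subfield bij_betw_imp_inj_on by blast
lemma gal_image: "\<sigma> \<in> galois_group p \<Longrightarrow> \<sigma> ` splitting_field p = splitting_field p"
  unfolding galois_group_def using bij_betw_imp_surj_on by blast
lemma gal_out: "\<sigma> \<in> galois_group p \<Longrightarrow> x \<notin> splitting_field p \<Longrightarrow> \<sigma> x = x"
  unfolding galois_group_def by blast
lemma gal_SF: "\<sigma> \<in> galois_group p \<Longrightarrow> x \<in> splitting_field p \<Longrightarrow> \<sigma> x \<in> splitting_field p"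
  using gal_image by blast

lemma fhom_root: assumes "fhom \<sigma> S" "croots p \<subseteq> S" "z \<in> croots p"
  shows "\<sigma> z \<in> croots p"
proof -
  have "ev p z = 0" using assms(3) by (simp add: croots_ev)
  hence "\<sigma> (ev p z) = 0" by (simp add: fh_0[OF assms(1)])
  hence "ev p (\<sigma> z) = 0" using fh_ev[OF assms(1)] assms(2,3) by auto
  thus ?thesis by (simp add: croots_ev)
qed

lemma gal_root: "\<sigma> \<in> galois_group p \<Longrightarrow> z \<in> croots p \<Longrightarrow> \<sigma> z \<in> croots p"
  using fhom_root[OF gal_fhom croots_SF] by blast

lemma fhom_subset: "fhom \<sigma> S \<Longrightarrow> is_subfield T \<Longrightarrow> T \<subseteq> S \<Longrightarrow> fhom \<sigma> T"
  unfolding fhom_def by (meson inj_on_subset subsetD)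

lemma eqz_subfield:
  assumes "fhom \<sigma>1 S" "fhom \<sigma>2 S"
  shows "is_subfield {x\<in>S. \<sigma>1 x = \<sigma>2 x}"
proof -
  have S: "is_subfield S" using assms(1) fh_sub by blast
  show ?thesis unfolding is_subfield_def
    using S assms
    by (auto simp: fh_0 fh_1 fh_add fh_diff fh_mult fh_inverse subfield_0 subfield_1
        subfield_add subfield_diff subfield_mult subfield_inverse)
qed

lemma gal_eq:
  assumes "\<sigma>1 \<in> galois_group p" "\<sigma>2 \<in> galois_group p"
    and "croots p \<subseteq> {x\<in>splitting_field p. \<sigma>1 x = \<sigma>2 x}"
  shows "\<sigma>1 = \<sigma>2"
proof
  fix x
  have "splitting_field p \<subseteq> {x\<in>splitting_field p. \<sigma>1 x = \<sigma>2 x}"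
    by (rule SF_min[OF eqz_subfield[OF gal_fhom gal_fhom]]) (use assms in auto)
  thus "\<sigma>1 x = \<sigma>2 x" using gal_out[OF assms(1), of x] gal_out[OF assms(2), of x] by (cases "x \<in> splitting_field p") auto
qed

lemma image_subfield:
  assumes "fhom \<sigma> S" shows "is_subfield (\<sigma> ` S)"
proof -
  have S: "is_subfield S" using assms fh_sub by blast
  show ?thesis unfolding is_subfield_def
  proof (intro conjI ballI impI)
    show "0 \<in> \<sigma> ` S" using fh_0[OF assms] subfield_0[OF S] by force
    show "1 \<in> \<sigma> ` S" using fh_1[OF assms] subfield_1[OF S] by force
  next
    fix u v assume "u \<in> \<sigma> ` S" "v \<in> \<sigma> ` S"
    then obtain x y where xy: "x \<in> S" "y \<in> S" "u = \<sigma> x" "v = \<sigma> y" by blast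
    show "u + v \<in> \<sigma> ` S" using xy fh_add[OF assms] subfield_add[OF S] by (metis image_eqI)
    show "u - v \<in> \<sigma> ` S" using xy fh_diff[OF assms] subfield_diff[OF S] by (metis image_eqI)
    show "u * v \<in> \<sigma> ` S" using xy fh_mult[OF assms] subfield_mult[OF S] by (metis image_eqI)
  next
    fix u assume "u \<in> \<sigma> ` S"
    then obtain x where "x \<in> S" "u = \<sigma> x" by blast
    thus "inverse u \<in> \<sigma> ` S" using fh_inverse[OF assms] subfield_inverse[OF S] by (metis image_eqI)
  qed
qed

lemma GEN:
  assumes p: "p \<noteq> 0" and h: "fhom \<sigma> (splitting_field p)"
    and im: "\<sigma> ` splitting_field p \<subseteq> splitting_field p"
  shows "\<sigma> ` splitting_field p = splitting_field p"
    and "(\<lambda>x. if x \<in> splitting_field p then \<sigma> x else x) \<in> galois_group p"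
proof -
  let ?S = "splitting_field p" and ?R = "croots p"
  have R: "finite ?R" using croots_finite p by blast
  have "\<sigma> ` ?R \<subseteq> ?R" using fhom_root[OF h croots_SF] by blast
  moreover have "inj_on \<sigma> ?R" using fh_inj[OF h] croots_SF inj_on_subset by blast
  ultimately have "\<sigma> ` ?R = ?R" using R by (simp add: endo_inj_surj)
  hence "?R \<subseteq> \<sigma> ` ?S" using croots_SF by blast
  hence "?S \<subseteq> \<sigma> ` ?S" by (rule SF_min[OF image_subfield[OF h]])
  thus eq: "\<sigma> ` ?S = ?S" using im by blast
  let ?t = "(\<lambda>x. if x \<in> ?S then \<sigma> x else x)"
  have "?t ` ?S = ?S" using eq by auto
  moreover have "inj_on ?t ?S" using fh_inj[OF h] by (auto simp: inj_on_def)
  ultimately have "bij_betw ?t ?S ?S" by (simp add: bij_betw_def)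
  moreover have "\<forall>x\<in>?S. \<forall>y\<in>?S. ?t (x + y) = ?t x + ?t y \<and> ?t (x * y) = ?t x * ?t y"
    using fh_add[OF h] fh_mult[OF h] subfield_add[OF SF_subfield] subfield_mult[OF SF_subfield] by auto
  ultimately show "?t \<in> galois_group p" unfolding galois_group_def by auto
qed

lemma REST:
  assumes s: "\<sigma> \<in> galois_group p" and q: "q \<noteq> 0" and sub: "croots q \<subseteq> splitting_field p"
  shows "\<exists>\<tau>\<in>galois_group q. \<forall>x\<in>splitting_field q. \<tau> x = \<sigma> x"
proof -
  let ?Sp = "splitting_field p" and ?Sq = "splitting_field q"
  have h: "fhom \<sigma> ?Sp" by (rule gal_fhom[OF s])
  have sub2: "?Sq \<subseteq> ?Sp" by (rule SF_min[OF SF_subfield sub])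
  have hq: "fhom \<sigma> ?Sq" by (rule fhom_subset[OF h SF_subfield sub2])
  have Pf: "is_subfield {x\<in>?Sp. \<sigma> x \<in> ?Sq}"
    unfolding is_subfield_def
    using SF_subfield[of p] SF_subfield[of q]
    by (auto simp: fh_0[OF h] fh_1[OF h] fh_add[OF h] fh_diff[OF h] fh_mult[OF h] fh_inverse[OF h]
        subfield_0 subfield_1 subfield_add subfield_diff subfield_mult subfield_inverse)
  have "croots q \<subseteq> {x\<in>?Sp. \<sigma> x \<in> ?Sq}"
    using sub fhom_root[OF h sub] croots_SF by blast
  hence "?Sq \<subseteq> {x\<in>?Sp. \<sigma> x \<in> ?Sq}" by (rule SF_min[OF Pf])
  hence "\<sigma> ` ?Sq \<subseteq> ?Sq" by blast
  from GEN(2)[OF q hq this] show ?thesis by (intro bexI[of _ "(\<lambda>x. if x \<in> ?Sq then \<sigma> x else x)"]) auto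
qed

lemma gal_restrict_inj: "inj_on (\<lambda>\<sigma>. restrict \<sigma> (croots q)) (galois_group q)"
proof (rule inj_onI)
  fix \<sigma>1 \<sigma>2 assume a: "\<sigma>1 \<in> galois_group q" "\<sigma>2 \<in> galois_group q"
    "restrict \<sigma>1 (croots q) = restrict \<sigma>2 (croots q)"
  have "\<forall>x\<in>croots q. \<sigma>1 x = \<sigma>2 x" using a(3) by (metis restrict_apply')
  thus "\<sigma>1 = \<sigma>2" using gal_eq[OF a(1,2)] croots_SF by blast
qed

lemma gal_finite: assumes q: "q \<noteq> 0" shows "finite (galois_group q)"
proof -
  have "(\<lambda>\<sigma>. restrict \<sigma> (croots q)) ` galois_group q \<subseteq> croots q \<rightarrow>\<^sub>E croots q"
    using gal_root by auto
  moreover have "finite (croots q \<rightarrow>\<^sub>E croots q)" using croots_finite[OF q] by (simp add: finite_PiE)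
  ultimately have "finite ((\<lambda>\<sigma>. restrict \<sigma> (croots q)) ` galois_group q)" by (rule finite_subset)
  thus ?thesis using gal_restrict_inj finite_image_iff by blast
qed


lemma not_irr: fixes p u v :: "rat poly"
  assumes "p = u * v" "degree u > 0" "degree v > 0" shows "\<not> irreducible p"
proof
  assume "irreducible p"
  hence "is_unit u \<or> is_unit v" using assms(1) irreducibleD by blast
  moreover have "u \<noteq> 0" "v \<noteq> 0" using assms by auto
  ultimately show False using assms is_unit_iff_degree by (metis neq0_conv)
qed

lemma poly_monom_rat: "poly (monom (c::rat) n) x = c * x ^ n" by (simp add: poly_monom)

lemma zeta_props:
  defines "\<zeta> \<equiv> Complex (-1/2) (sqrt 3 / 2)"
  shows "\<zeta>^2 + \<zeta> + 1 = 0" "\<zeta> ^ 3 = 1" "\<zeta> \<noteq> 1" "\<zeta> \<noteq> 0"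
proof -
  have s: "sqrt 3 * sqrt 3 = (3::real)" by simp
  show z: "\<zeta>^2 + \<zeta> + 1 = 0" unfolding \<zeta>_def
    by (simp add: complex_eq_iff power2_eq_square s)
  have "\<zeta>^3 - 1 = (\<zeta> - 1) * (\<zeta>^2 + \<zeta> + 1)" by algebra
  thus "\<zeta> ^ 3 = 1" using z by simp
  show "\<zeta> \<noteq> 1" "\<zeta> \<noteq> 0" unfolding \<zeta>_def by (simp_all add: complex_eq_iff)
qed

lemma cube_eq:
  fixes z u \<zeta> :: complex assumes "\<zeta>^2 + \<zeta> + 1 = 0" "z ^ 3 = u ^ 3"
  shows "z = u \<or> z = u * \<zeta> \<or> z = u * \<zeta>^2"
proof -
  have "z^3 - u^3 = (z - u) * (z - u * \<zeta>) * (z - u * \<zeta>^2)"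
    using assms(1) by algebra
  thus ?thesis using assms(2) by auto
qed

lemma quad_roots:
  fixes A B u v w :: complex
  assumes "u \<noteq> v" "u^2 + A*u + B = 0" "v^2 + A*v + B = 0"
  shows "u + v = - A" "u * v = B" "w^2 + A*w + B = 0 \<longleftrightarrow> w = u \<or> w = v"
proof -
  have "(u - v) * (u + v + A) = 0" using assms(2,3) by algebra
  thus s: "u + v = - A" using assms(1) by (simp add: eq_neg_iff_add_eq_0)
  thus p: "u * v = B" using assms(2) by algebra
  have "w^2 + A*w + B = (w - u) * (w - v)" using s p by algebra
  thus "w^2 + A*w + B = 0 \<longleftrightarrow> w = u \<or> w = v" by simp
qed

lemma nth_root_exists: "n > 0 \<Longrightarrow> \<exists>z::complex. z ^ n = c"
proof (cases "c = 0")
  case True assume "n > 0" thus ?thesis using True by (intro exI[of _ 0]) simp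
next
  case False assume n: "n > 0"
  hence "card {z::complex. z ^ n = c} = n" using card_nth_roots False by blast
  hence "{z::complex. z ^ n = c} \<noteq> {}" using n by (metis card.empty less_irrefl)
  thus ?thesis by blast
qed

lemma card_nth_roots_le: "n > 0 \<Longrightarrow> card {z::complex. z ^ n = c} \<le> n"
  by (cases "c = 0") (simp_all add: card_nth_roots)

locale P12 =
  fixes a b :: rat
  assumes irr: "irreducible (monom 1 12 + monom a 6 + [:b:])"
begin

definition "f = monom 1 12 + monom a 6 + [:b:]"
definition "g4 = monom 1 4 + monom a 2 + [:b:]"
definition "g6 = monom 1 6 + monom a 3 + [:b:]"
abbreviation "A \<equiv> (of_rat a :: complex)"
abbreviation "B \<equiv> (of_rat b :: complex)"

lemma ev_f: "ev f z = z^12 + A * z^6 + B" by (simp add: f_def)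
lemma ev_g4: "ev g4 z = z^4 + A * z^2 + B" by (simp add: g4_def)
lemma ev_g6: "ev g6 z = z^6 + A * z^3 + B" by (simp add: g6_def)

lemma f_ne: "f \<noteq> 0" using irr by (auto simp: f_def)
lemma g4_ne: "g4 \<noteq> 0"
proof -
  have "coeff g4 4 = 1" by (simp add: g4_def coeff_monom monom_0[symmetric] del: monom_0)
  thus ?thesis by auto
qed
lemma g6_ne: "g6 \<noteq> 0"
proof -
  have "coeff g6 6 = 1" by (simp add: g6_def coeff_monom monom_0[symmetric] del: monom_0)
  thus ?thesis by auto
qed

lemma b_ne: "b \<noteq> 0"
proof
  assume b0: "b = 0"
  have "f = monom 1 6 * (monom 1 6 + [:a:])"
    unfolding f_def by (intro poly_eq_poly_eq_iff[THEN iffD1] ext) (simp add: b0 poly_monom algebra_simps)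
  moreover have "degree (monom 1 6 + [:a:]) = 6"
    by (subst degree_add_eq_left) (simp_all add: degree_monom_eq)
  moreover have "degree (monom (1::rat) 6) = 6" by (simp add: degree_monom_eq)
  ultimately have "\<not> irreducible f" by (metis not_irr zero_less_numeral)
  thus False using irr f_def by simp
qed

lemma disc_ne: "a^2 \<noteq> 4 * b"
proof
  assume d: "a^2 = 4 * b"
  have bb: "b = a * a / 4" using d by (simp add: power2_eq_square)
  have "f = (monom 1 6 + [:a/2:]) * (monom 1 6 + [:a/2:])"
    unfolding f_def by (intro poly_eq_poly_eq_iff[THEN iffD1] ext) (simp add: poly_monom algebra_simps bb)
  moreover have "degree (monom 1 6 + [:a/2:]) = 6"
    by (subst degree_add_eq_left) (simp_all add: degree_monom_eq)
  ultimately have "\<not> irreducible f" by (metis not_irr zero_less_numeral)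
  thus False using irr f_def by simp
qed

lemma f_comp4: "f = pcompose g4 (monom 1 3)"
  unfolding f_def g4_def
  by (intro poly_eq_poly_eq_iff[THEN iffD1] ext) (simp add: poly_pcompose poly_monom power_mult[symmetric])

lemma f_comp6: "f = pcompose g6 (monom 1 2)"
  unfolding f_def g6_def
  by (intro poly_eq_poly_eq_iff[THEN iffD1] ext) (simp add: poly_pcompose poly_monom power_mult[symmetric])

lemma g4_irr: "irreducible g4"
proof (rule irreducibleI)
  show "g4 \<noteq> 0" by (rule g4_ne)
  have "coeff g4 4 = 1" by (simp add: g4_def coeff_monom monom_0[symmetric] del: monom_0)
  hence "4 \<le> degree g4" by (simp add: le_degree)
  thus "\<not> is_unit g4" using is_unit_iff_degree[OF g4_ne] by simp
next
  fix u v assume uv: "g4 = u * v"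
  show "is_unit u \<or> is_unit v"
  proof (rule ccontr)
    assume nu: "\<not> (is_unit u \<or> is_unit v)"
    have "u \<noteq> 0" "v \<noteq> 0" using uv g4_ne by auto
    hence du: "degree u > 0" "degree v > 0" using nu is_unit_iff_degree by auto
    have "f = pcompose u (monom 1 3) * pcompose v (monom 1 3)"
      using f_comp4 uv pcompose_mult by metis
    moreover have "degree (pcompose u (monom (1::rat) 3)) > 0" "degree (pcompose v (monom (1::rat) 3)) > 0"
      using du by (simp_all add: degree_pcompose degree_monom_eq)
    ultimately have "\<not> irreducible f" by (metis not_irr)
    thus False using irr f_def by simp
  qed
qed

end


lemma sixth_eq:
  fixes z c \<zeta> :: complex assumes z: "\<zeta>^2 + \<zeta> + 1 = 0" and e: "z ^ 6 = c ^ 6"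
  shows "z \<in> {c, c*\<zeta>, c*\<zeta>^2, -c, -c*\<zeta>, -c*\<zeta>^2}"
proof -
  have "(z^3 - c^3) * (z^3 - (-c)^3) = z^6 - c^6" by algebra
  hence "(z^3 - c^3) * (z^3 - (-c)^3) = 0" using e by simp
  hence "z^3 = c^3 \<or> z^3 = (-c)^3" by (simp only: mult_eq_0_iff right_minus_eq)
  thus ?thesis
  proof
    assume "z^3 = c^3"
    from cube_eq[OF z this] show ?thesis by (simp only: insert_iff) blast
  next
    assume "z^3 = (-c)^3"
    from cube_eq[OF z this] show ?thesis by (simp only: insert_iff) blast
  qed
qed

lemma sixth_in_subfield:
  fixes z c \<zeta> :: complex assumes S: "is_subfield S" and z: "\<zeta>^2 + \<zeta> + 1 = 0" and e: "z ^ 6 = c ^ 6"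
    and "c \<in> S" "\<zeta> \<in> S"
  shows "z \<in> S"
proof -
  have c: "c \<in> S" "-c \<in> S" "\<zeta> \<in> S" "\<zeta>^2 \<in> S" using assms subfield_neg[OF S] subfield_power[OF S] by auto
  have "c*\<zeta> \<in> S" "c*\<zeta>^2 \<in> S" "-c*\<zeta> \<in> S" "-c*\<zeta>^2 \<in> S" using c subfield_mult[OF S] by blast+
  thus ?thesis using sixth_eq[OF z e] c by (simp only: insert_iff empty_iff) blast
qed

context P12 begin

definition "dd = csqrt (A^2 - 4*B)"
definition "t1 = (- A + dd) / 2"
definition "t2 = - A - t1"
definition "c1 = (SOME z. z ^ 6 = t1)"
definition "c2 = (SOME z. z ^ 6 = t2)"
definition "zeta = Complex (-1/2) (sqrt 3 / 2)"
definition "\<alpha> = c1 ^ 3"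
definition "\<beta> = c2 ^ 3"

lemma zeta: "zeta^2 + zeta + 1 = 0" "zeta ^ 3 = 1" "zeta \<noteq> 1" "zeta \<noteq> 0"
  using zeta_props unfolding zeta_def by auto

lemma B_ne: "B \<noteq> 0" using b_ne by simp
lemma AB_ne: "A^2 - 4*B \<noteq> 0"
proof -
  have "A^2 - 4*B = of_rat (a^2 - 4*b)" by (simp add: of_rat_diff of_rat_mult of_rat_power)
  thus ?thesis using disc_ne by simp
qed

lemma dd_sq: "dd^2 = A^2 - 4*B" by (simp add: dd_def)
lemma dd_ne: "dd \<noteq> 0" using dd_sq AB_ne by auto

lemma t1_2: "2 * t1 = - A + dd" unfolding t1_def by simp
lemma t1_root: "t1^2 + A*t1 + B = 0"
proof -
  have "4 * (t1^2 + A*t1 + B) = (2*t1)^2 + 2*A*(2*t1) + 4*B" by (simp add: algebra_simps power2_eq_square)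
  also have "\<dots> = dd^2 - A^2 + 4*B" unfolding t1_2 by (simp add: algebra_simps power2_eq_square)
  also have "\<dots> = 0" by (simp add: dd_sq)
  finally have "4 * (t1^2 + A*t1 + B) = 0" .
  thus ?thesis by (simp only: mult_eq_0_iff) simp
qed
lemma t2_root: "t2^2 + A*t2 + B = 0"
proof -
  have "t2^2 + A*t2 + B = t1^2 + A*t1 + B" unfolding t2_def by (simp add: algebra_simps power2_eq_square)
  thus ?thesis using t1_root by simp
qed
lemma t12_ne: "t1 \<noteq> t2"
proof
  assume "t1 = t2" hence "2 * t1 = - A" unfolding t2_def by simp
  hence "dd = 0" using t1_2 by simp
  thus False using dd_ne by simp
qed
lemma t_prod: "t1 * t2 = B" using quad_roots(2)[OF t12_ne t1_root t2_root] .
lemma t_quad: "w^2 + A*w + B = 0 \<longleftrightarrow> w = t1 \<or> w = t2"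
  using quad_roots(3)[OF t12_ne t1_root t2_root] .
lemma t1_ne: "t1 \<noteq> 0" using t_prod B_ne by auto
lemma t2_ne: "t2 \<noteq> 0" using t_prod B_ne by auto

lemma c1_6: "c1 ^ 6 = t1" unfolding c1_def by (rule someI_ex) (rule nth_root_exists, simp)
lemma c2_6: "c2 ^ 6 = t2" unfolding c2_def by (rule someI_ex) (rule nth_root_exists, simp)
lemma c1_ne: "c1 \<noteq> 0" using c1_6 t1_ne by auto
lemma c2_ne: "c2 \<noteq> 0" using c2_6 t2_ne by auto
lemma alpha_sq: "\<alpha>^2 = t1" unfolding \<alpha>_def using c1_6 by (simp add: power_mult[symmetric])
lemma beta_sq: "\<beta>^2 = t2" unfolding \<beta>_def using c2_6 by (simp add: power_mult[symmetric])

lemma rootf: "z \<in> croots f \<longleftrightarrow> z^6 = t1 \<or> z^6 = t2"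
proof -
  have "ev f z = (z^6)^2 + A * z^6 + B" by (simp add: ev_f power_mult[symmetric])
  thus ?thesis by (simp add: croots_ev t_quad[symmetric])
qed
lemma root6: "z \<in> croots g6 \<longleftrightarrow> z^3 = t1 \<or> z^3 = t2"
proof -
  have "ev g6 z = (z^3)^2 + A * z^3 + B" by (simp add: ev_g6 power_mult[symmetric])
  thus ?thesis by (simp add: croots_ev t_quad[symmetric])
qed
lemma root4: "z \<in> croots g4 \<longleftrightarrow> z = \<alpha> \<or> z = -\<alpha> \<or> z = \<beta> \<or> z = -\<beta>"
proof -
  have "ev g4 z = (z^2)^2 + A * z^2 + B" by (simp add: ev_g4 power_mult[symmetric])
  hence "z \<in> croots g4 \<longleftrightarrow> z^2 = \<alpha>^2 \<or> z^2 = \<beta>^2" by (simp add: croots_ev t_quad[symmetric] alpha_sq beta_sq)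
  thus ?thesis by (auto simp: power2_eq_iff)
qed
lemma R4: "croots g4 = {\<alpha>, -\<alpha>, \<beta>, -\<beta>}" using root4 by auto

lemma ab_ne: "\<alpha> \<noteq> 0" "\<beta> \<noteq> 0" "\<alpha> \<noteq> -\<alpha>" "\<beta> \<noteq> -\<beta>" "\<alpha> \<noteq> \<beta>" "\<alpha> \<noteq> -\<beta>" "-\<alpha> \<noteq> \<beta>" "-\<alpha> \<noteq> -\<beta>"
  using alpha_sq beta_sq t1_ne t2_ne t12_ne by (auto simp: power2_eq_square) (metis minus_mult_minus)+

lemma card_R4: "card (croots g4) = 4"
  unfolding R4 using ab_ne by auto

lemma s_sq: "(\<alpha> * \<beta>)^2 = B" by (simp add: power_mult_distrib alpha_sq beta_sq t_prod)

lemma c1_root: "c1 \<in> croots f" using rootf c1_6 by simp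
lemma c2_root: "c2 \<in> croots f" using rootf c2_6 by simp
lemma zc1_root: "zeta * c1 \<in> croots f"
proof -
  have "(zeta * c1)^6 = (zeta^3)^2 * c1^6" by (simp add: power_mult_distrib power_mult[symmetric])
  thus ?thesis using rootf c1_6 zeta by simp
qed

abbreviation "SFf \<equiv> splitting_field f"
lemma SFf: "is_subfield SFf" by (rule SF_subfield)
lemma c1_SF: "c1 \<in> SFf" using c1_root croots_SF by blast
lemma c2_SF: "c2 \<in> SFf" using c2_root croots_SF by blast
lemma zeta_SF: "zeta \<in> SFf"
proof -
  have "zeta = (zeta * c1) / c1" using c1_ne by simp
  thus ?thesis using subfield_divide[OF SFf] zc1_root croots_SF c1_SF by (metis subsetD)
qed
lemma R4_SF: "croots g4 \<subseteq> SFf"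
  unfolding R4 \<alpha>_def \<beta>_def using c1_SF c2_SF subfield_power[OF SFf] subfield_neg[OF SFf] by auto
lemma R6_SF: "croots g6 \<subseteq> SFf"
proof
  fix z assume z: "z \<in> croots g6"
  have "(csqrt z)^6 = z^3" using power_mult[of "csqrt z" 2 3] by simp
  hence "csqrt z \<in> croots f" using z root6 rootf by simp
  hence "csqrt z \<in> SFf" using croots_SF by blast
  hence "(csqrt z)^2 \<in> SFf" by (rule subfield_power[OF SFf])
  thus "z \<in> SFf" by simp
qed

lemma rootsf_gen:
  assumes S: "is_subfield S" and "c1 \<in> S" "c2 \<in> S" "zeta \<in> S"
  shows "croots f \<subseteq> S"
proof
  fix z assume "z \<in> croots f"
  hence "z^6 = c1^6 \<or> z^6 = c2^6" using rootf c1_6 c2_6 by simp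
  thus "z \<in> S" using sixth_in_subfield[OF S zeta(1)] assms by blast
qed

end


context P12 begin

lemma gal_zeta: assumes s: "\<sigma> \<in> galois_group f" shows "\<sigma> zeta \<in> {zeta, zeta^2}"
proof -
  have h: "fhom \<sigma> SFf" by (rule gal_fhom[OF s])
  have "(\<sigma> zeta)^3 = 1^3" using fh_power[OF h zeta_SF, of 3] zeta(2) fh_1[OF h] by simp
  hence "\<sigma> zeta \<in> {1, zeta, zeta^2}" using cube_eq[OF zeta(1)] by (metis insert_iff mult_1)
  moreover have "\<sigma> zeta \<noteq> 1"
  proof
    assume "\<sigma> zeta = 1"
    hence "\<sigma> zeta = \<sigma> 1" by (simp add: fh_1[OF h])
    hence "zeta = 1" using fh_inj[OF h] zeta_SF subfield_1[OF SFf] by (meson inj_onD)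
    thus False using zeta by simp
  qed
  ultimately show ?thesis by auto
qed

lemma card_roots3: "card {u::complex. u ^ 3 = w} \<le> 3" by (rule card_nth_roots_le) simp
lemma card_roots2: "card {u::complex. u ^ 2 = w} \<le> 2" by (rule card_nth_roots_le) simp

lemma bound1: "card (galois_group f) \<le> 18 * card (galois_group g4)"
proof -
  let ?R = "croots g4"
  let ?Res = "(\<lambda>\<tau>. restrict \<tau> ?R) ` galois_group g4"
  let ?T = "\<Union>\<rho>\<in>?Res. {\<rho>} \<times> ({zeta, zeta^2} \<times> ({u. u^3 = \<rho> \<alpha>} \<times> {v. v^3 = \<rho> \<beta>}))"
  let ?\<Phi> = "\<lambda>\<sigma>. (restrict \<sigma> ?R, \<sigma> zeta, \<sigma> c1, \<sigma> c2)"
  have finG: "finite (galois_group g4)" by (rule gal_finite[OF g4_ne])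
  hence finRes: "finite ?Res" by simp
  have aR: "\<alpha> \<in> ?R" "\<beta> \<in> ?R" using R4 by auto
  have inj: "inj_on ?\<Phi> (galois_group f)"
  proof (rule inj_onI)
    fix \<sigma>1 \<sigma>2 assume s: "\<sigma>1 \<in> galois_group f" "\<sigma>2 \<in> galois_group f" "?\<Phi> \<sigma>1 = ?\<Phi> \<sigma>2"
    let ?E = "{x\<in>SFf. \<sigma>1 x = \<sigma>2 x}"
    have E: "is_subfield ?E" by (rule eqz_subfield[OF gal_fhom[OF s(1)] gal_fhom[OF s(2)]])
    have "croots f \<subseteq> ?E" by (rule rootsf_gen[OF E]) (use s(3) c1_SF c2_SF zeta_SF in auto)
    thus "\<sigma>1 = \<sigma>2" by (rule gal_eq[OF s(1,2)])
  qed
  have sub: "?\<Phi> ` galois_group f \<subseteq> ?T"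
  proof
    fix x assume "x \<in> ?\<Phi> ` galois_group f"
    then obtain \<sigma> where s: "\<sigma> \<in> galois_group f" and x: "x = ?\<Phi> \<sigma>" by blast
    have h: "fhom \<sigma> SFf" by (rule gal_fhom[OF s])
    obtain \<tau> where t: "\<tau> \<in> galois_group g4" "\<forall>y\<in>splitting_field g4. \<tau> y = \<sigma> y"
      using REST[OF s g4_ne R4_SF] by blast
    have "restrict \<sigma> ?R = restrict \<tau> ?R" by (intro restrict_ext) (metis t(2) croots_SF subsetD)
    hence rr: "restrict \<sigma> ?R \<in> ?Res" using t(1) by blast
    have "(\<sigma> c1)^3 = \<sigma> \<alpha>" unfolding \<alpha>_def using fh_power[OF h c1_SF] by simp
    hence 1: "(\<sigma> c1)^3 = restrict \<sigma> ?R \<alpha>" using aR by simp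
    have "(\<sigma> c2)^3 = \<sigma> \<beta>" unfolding \<beta>_def using fh_power[OF h c2_SF] by simp
    hence 2: "(\<sigma> c2)^3 = restrict \<sigma> ?R \<beta>" using aR by simp
    show "x \<in> ?T" unfolding x using rr 1 2 gal_zeta[OF s] by blast
  qed
  have finT: "finite ?T" by (rule finite_UN_I[OF finRes]) (auto intro!: finite_cartesian_product finite_nth_roots)
  have "card (galois_group f) \<le> card ?T" by (rule card_inj_on_le[OF inj sub finT])
  also have "\<dots> \<le> (\<Sum>\<rho>\<in>?Res. card ({\<rho>} \<times> ({zeta, zeta^2} \<times> ({u. u^3 = \<rho> \<alpha>} \<times> {v. v^3 = \<rho> \<beta>}))))"
    by (rule card_UN_le[OF finRes])
  also have "\<dots> \<le> (\<Sum>\<rho>\<in>?Res. 18)"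
  proof (rule sum_mono)
    fix \<rho> :: "complex \<Rightarrow> complex"
    have "card {zeta, zeta^2} \<le> 2" by (simp add: card_insert_le_m1)
    moreover note card_roots3[of "\<rho> \<alpha>"] card_roots3[of "\<rho> \<beta>"]
    ultimately have "card {zeta, zeta^2} * (card {u. u^3 = \<rho> \<alpha>} * card {v. v^3 = \<rho> \<beta>}) \<le> 2 * (3 * 3)"
      by (intro mult_le_mono) auto
    thus "card ({\<rho>} \<times> ({zeta, zeta^2} \<times> ({u. u^3 = \<rho> \<alpha>} \<times> {v. v^3 = \<rho> \<beta>}))) \<le> 18"
      by (simp add: card_cartesian_product)
  qed
  also have "\<dots> = 18 * card ?Res" by simp
  also have "\<dots> \<le> 18 * card (galois_group g4)" using card_image_le[OF finG] by simp
  finally show ?thesis .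
qed

lemma rootsf_gen6:
  assumes S: "is_subfield S" and "c1 \<in> S" "c2 \<in> S" "croots g6 \<subseteq> S"
  shows "croots f \<subseteq> S"
proof
  fix z assume z: "z \<in> croots f"
  hence "z^6 = c1^6 \<or> z^6 = c2^6" using rootf c1_6 c2_6 by simp
  then obtain c where c: "c \<in> {c1, c2}" "z^6 = c^6" by blast
  have "(z^3 - c^3) * (z^3 - (-c)^3) = z^6 - c^6" by algebra
  hence "(z^3 - c^3) * (z^3 - (-c)^3) = 0" using c by simp
  hence "z^3 = c^3 \<or> z^3 = - (c^3)" by (simp only: mult_eq_0_iff right_minus_eq power_minus_odd) simp
  then obtain e where e: "e = 1 \<or> e = -1" "z^3 = e * c^3" by (metis mult_1 mult_minus1)
  have z0: "z \<noteq> 0" using z rootf t1_ne t2_ne by auto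
  have z2: "z^2 \<in> croots g6" using z rootf root6 by (simp add: power_mult[symmetric])
  have "z = e * c^3 / z^2" using e(2) z0 by (simp add: field_simps power3_eq_cube power2_eq_square)
  moreover have "e \<in> S" using e(1) subfield_1[OF S] subfield_neg[OF S] by auto
  moreover have "c \<in> S" using c assms by auto
  ultimately show "z \<in> S" using z2 assms
    by (metis subsetD subfield_mult subfield_divide subfield_power)
qed

lemma bound2: "card (galois_group f) \<le> 4 * card (galois_group g6)"
proof -
  let ?R = "croots g6"
  let ?Res = "(\<lambda>\<tau>. restrict \<tau> ?R) ` galois_group g6"
  let ?T = "\<Union>\<rho>\<in>?Res. {\<rho>} \<times> ({u. u^2 = \<rho> (c1^2)} \<times> {v. v^2 = \<rho> (c2^2)})"
  let ?\<Phi> = "\<lambda>\<sigma>. (restrict \<sigma> ?R, \<sigma> c1, \<sigma> c2)"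
  have finG: "finite (galois_group g6)" by (rule gal_finite[OF g6_ne])
  hence finRes: "finite ?Res" by simp
  have cR: "c1^2 \<in> ?R" "c2^2 \<in> ?R" using root6 c1_6 c2_6 by (simp_all add: power_mult[symmetric])
  have inj: "inj_on ?\<Phi> (galois_group f)"
  proof (rule inj_onI)
    fix \<sigma>1 \<sigma>2 assume s: "\<sigma>1 \<in> galois_group f" "\<sigma>2 \<in> galois_group f" "?\<Phi> \<sigma>1 = ?\<Phi> \<sigma>2"
    let ?E = "{x\<in>SFf. \<sigma>1 x = \<sigma>2 x}"
    have E: "is_subfield ?E" by (rule eqz_subfield[OF gal_fhom[OF s(1)] gal_fhom[OF s(2)]])
    have "\<forall>x\<in>?R. \<sigma>1 x = \<sigma>2 x" using s(3) by (metis prod.inject restrict_apply')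
    hence "?R \<subseteq> ?E" using R6_SF by auto
    hence "croots f \<subseteq> ?E" by (intro rootsf_gen6[OF E]) (use s(3) c1_SF c2_SF in auto)
    thus "\<sigma>1 = \<sigma>2" by (rule gal_eq[OF s(1,2)])
  qed
  have sub: "?\<Phi> ` galois_group f \<subseteq> ?T"
  proof
    fix x assume "x \<in> ?\<Phi> ` galois_group f"
    then obtain \<sigma> where s: "\<sigma> \<in> galois_group f" and x: "x = ?\<Phi> \<sigma>" by blast
    have h: "fhom \<sigma> SFf" by (rule gal_fhom[OF s])
    obtain \<tau> where t: "\<tau> \<in> galois_group g6" "\<forall>y\<in>splitting_field g6. \<tau> y = \<sigma> y"
      using REST[OF s g6_ne R6_SF] by blast
    have "restrict \<sigma> ?R = restrict \<tau> ?R" by (intro restrict_ext) (metis t(2) croots_SF subsetD)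
    hence rr: "restrict \<sigma> ?R \<in> ?Res" using t(1) by blast
    have 1: "(\<sigma> c1)^2 = restrict \<sigma> ?R (c1^2)" using fh_power[OF h c1_SF] cR by simp
    have 2: "(\<sigma> c2)^2 = restrict \<sigma> ?R (c2^2)" using fh_power[OF h c2_SF] cR by simp
    show "x \<in> ?T" unfolding x using rr 1 2 by blast
  qed
  have finT: "finite ?T" by (rule finite_UN_I[OF finRes]) (auto intro!: finite_cartesian_product finite_nth_roots)
  have "card (galois_group f) \<le> card ?T" by (rule card_inj_on_le[OF inj sub finT])
  also have "\<dots> \<le> (\<Sum>\<rho>\<in>?Res. card ({\<rho>} \<times> ({u. u^2 = \<rho> (c1^2)} \<times> {v. v^2 = \<rho> (c2^2)})))"
    by (rule card_UN_le[OF finRes])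
  also have "\<dots> \<le> (\<Sum>\<rho>\<in>?Res. 4)"
  proof (rule sum_mono)
    fix \<rho> :: "complex \<Rightarrow> complex"
    have "card {u. u^2 = \<rho> (c1^2)} * card {v. v^2 = \<rho> (c2^2)} \<le> 2 * 2"
      using card_roots2 by (intro mult_le_mono) auto
    thus "card ({\<rho>} \<times> ({u. u^2 = \<rho> (c1^2)} \<times> {v. v^2 = \<rho> (c2^2)})) \<le> 4"
      by (simp add: card_cartesian_product)
  qed
  also have "\<dots> = 4 * card ?Res" by simp
  also have "\<dots> \<le> 4 * card (galois_group g6)" using card_image_le[OF finG] by simp
  finally show ?thesis .
qed

end


lemma ev_1[simp]: "ev 1 x = 1" by (simp add: ev_def)

definition Qad :: "complex \<Rightarrow> complex set" where
  "Qad x = {ev p x | p. True}"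

lemma min_dvd:
  assumes g: "irreducible (g :: rat poly)" and gx: "ev g x = 0" and px: "ev p x = 0"
  shows "g dvd p"
proof (rule ccontr)
  assume "\<not> g dvd p"
  moreover have "prime_elem g" using g irreducible_imp_prime_elem by blast
  ultimately have "coprime g p" using prime_elem_imp_coprime by blast
  hence "gcd g p = 1" by simp
  hence "fst (bezout_coefficients g p) * g + snd (bezout_coefficients g p) * p = 1"
    using bezout_coefficients_fst_snd by metis
  hence "ev (fst (bezout_coefficients g p) * g + snd (bezout_coefficients g p) * p) x = ev 1 x" by simp
  thus False using gx px by simp
qed


lemma ev_dvd_zero: "g dvd p \<Longrightarrow> ev g x = 0 \<Longrightarrow> ev p x = 0"
  by (auto elim!: dvdE)

lemma Qad_subfield:
  assumes g: "irreducible (g :: rat poly)" and gx: "ev g x = 0"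
  shows "is_subfield (Qad x)"
  unfolding is_subfield_def
proof (intro conjI ballI impI)
  show "0 \<in> Qad x" unfolding Qad_def by (metis (mono_tags, lifting) ev_0 mem_Collect_eq)
  show "1 \<in> Qad x" unfolding Qad_def by (metis (mono_tags, lifting) ev_1 mem_Collect_eq)
next
  fix y z assume "y \<in> Qad x" "z \<in> Qad x"
  then obtain p q where pq: "y = ev p x" "z = ev q x" unfolding Qad_def by blast
  show "y + z \<in> Qad x" unfolding Qad_def pq by (metis (mono_tags, lifting) ev_add mem_Collect_eq)
  show "y - z \<in> Qad x" unfolding Qad_def pq by (metis (mono_tags, lifting) ev_diff mem_Collect_eq)
  show "y * z \<in> Qad x" unfolding Qad_def pq by (metis (mono_tags, lifting) ev_mult mem_Collect_eq)
next
  fix y assume y: "y \<in> Qad x" "y \<noteq> 0"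
  then obtain p where p: "y = ev p x" unfolding Qad_def by blast
  have "\<not> g dvd p" using ev_dvd_zero gx p y(2) by blast
  moreover have "prime_elem g" using g irreducible_imp_prime_elem by blast
  ultimately have "coprime g p" using prime_elem_imp_coprime by blast
  hence "gcd g p = 1" by simp
  hence "fst (bezout_coefficients g p) * g + snd (bezout_coefficients g p) * p = 1"
    using bezout_coefficients_fst_snd by metis
  hence "ev (fst (bezout_coefficients g p) * g + snd (bezout_coefficients g p) * p) x = 1" by simp
  hence "ev (snd (bezout_coefficients g p)) x * y = 1" using gx p by simp
  hence "inverse y = ev (snd (bezout_coefficients g p)) x" by (metis inverse_unique mult.commute)
  thus "inverse y \<in> Qad x" unfolding Qad_def by blast
qed

lemma Qad_min: "is_subfield S \<Longrightarrow> x \<in> S \<Longrightarrow> Qad x \<subseteq> S"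
  unfolding Qad_def using subfield_ev by blast
lemma Qad_self: "x \<in> Qad x" unfolding Qad_def by (metis (mono_tags, lifting) ev_X mem_Collect_eq)
lemma Qad_rat: "of_rat q \<in> Qad x" unfolding Qad_def by (metis (mono_tags, lifting) ev_const mem_Collect_eq)

lemma TRANS:
  assumes g: "irreducible (g :: rat poly)" and x: "x \<in> croots g" and R: "croots g \<subseteq> Qad x"
    and x': "x' \<in> croots g"
  shows "\<exists>\<sigma>\<in>galois_group g. \<forall>p. \<sigma> (ev p x) = ev p x'"
proof -
  have g0: "g \<noteq> 0" using g by auto
  have gx: "ev g x = 0" and gx': "ev g x' = 0" using x x' by (auto simp: croots_ev)
  have Q: "is_subfield (Qad x)" by (rule Qad_subfield[OF g gx])
  have SF: "splitting_field g = Qad x"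
  proof
    show "splitting_field g \<subseteq> Qad x" by (rule SF_min[OF Q R])
    show "Qad x \<subseteq> splitting_field g" by (rule Qad_min[OF SF_subfield]) (use x croots_SF in blast)
  qed
  have wd: "ev p x = ev q x \<longleftrightarrow> ev p x' = ev q x'" for p q
  proof
    assume "ev p x = ev q x" hence "ev (p - q) x = 0" by simp
    hence "g dvd p - q" by (rule min_dvd[OF g gx])
    hence "ev (p - q) x' = 0" using ev_dvd_zero gx' by blast
    thus "ev p x' = ev q x'" by simp
  next
    assume "ev p x' = ev q x'" hence "ev (p - q) x' = 0" by simp
    hence "g dvd p - q" by (rule min_dvd[OF g gx'])
    hence "ev (p - q) x = 0" using ev_dvd_zero gx by blast
    thus "ev p x = ev q x" by simp
  qed
  define \<sigma> where "\<sigma> y = ev (SOME p. y = ev p x) x'" for y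
  have \<sigma>: "\<sigma> (ev p x) = ev p x'" for p
  proof -
    have "ev p x = ev (SOME q. ev p x = ev q x) x" by (rule someI_ex) blast
    thus ?thesis unfolding \<sigma>_def using wd by metis
  qed
  have h: "fhom \<sigma> (Qad x)" unfolding fhom_def
  proof (intro conjI ballI)
    show "is_subfield (Qad x)" by (rule Q)
    show "inj_on \<sigma> (Qad x)"
    proof (rule inj_onI)
      fix y z assume "y \<in> Qad x" "z \<in> Qad x" "\<sigma> y = \<sigma> z"
      then obtain p q where "y = ev p x" "z = ev q x" "ev p x' = ev q x'" unfolding Qad_def using \<sigma> by auto
      thus "y = z" using wd by simp
    qed
  next
    fix y z assume "y \<in> Qad x" "z \<in> Qad x"
    then obtain p q where pq: "y = ev p x" "z = ev q x" unfolding Qad_def by blast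
    show "\<sigma> (y + z) = \<sigma> y + \<sigma> z" unfolding pq by (metis \<sigma> ev_add)
    show "\<sigma> (y * z) = \<sigma> y * \<sigma> z" unfolding pq by (metis \<sigma> ev_mult)
  qed
  have im: "\<sigma> ` Qad x \<subseteq> Qad x"
  proof
    fix w assume "w \<in> \<sigma> ` Qad x"
    then obtain p where "w = ev p x'" unfolding Qad_def using \<sigma> by auto
    moreover have "x' \<in> Qad x" using R x' by blast
    ultimately show "w \<in> Qad x" using subfield_ev[OF Q] by blast
  qed
  define \<tau> where "\<tau> = (\<lambda>y. if y \<in> splitting_field g then \<sigma> y else y)"
  have "\<tau> \<in> galois_group g"
    using GEN(2)[OF g0] h im unfolding SF \<tau>_def by simp
  moreover have "\<forall>p. \<tau> (ev p x) = ev p x'"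
  proof
    fix p have "ev p x \<in> splitting_field g" unfolding SF Qad_def by blast
    thus "\<tau> (ev p x) = ev p x'" unfolding \<tau>_def using \<sigma> by simp
  qed
  ultimately show ?thesis by blast
qed

lemma QEXT:
  assumes F: "is_subfield F" and b: "\<beta> \<notin> F" and b2: "\<beta>^2 \<in> F"
  defines "K \<equiv> {u + v * \<beta> | u v. u \<in> F \<and> v \<in> F}"
  shows "is_subfield K"
    and "\<exists>\<tau>. fhom \<tau> K \<and> \<tau> ` K \<subseteq> K \<and> (\<forall>u\<in>F. \<forall>v\<in>F. \<tau> (u + v * \<beta>) = u - v * \<beta>)"
proof -
  have uniq: "u = u' \<and> v = v'" if "u \<in> F" "v \<in> F" "u' \<in> F" "v' \<in> F" "u + v * \<beta> = u' + v' * \<beta>" for u v u' v'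
  proof (cases "v = v'")
    case True thus ?thesis using that by simp
  next
    case False
    have "\<beta> = (u - u') / (v' - v)" using that(5) False by (simp add: field_simps)
    hence "\<beta> \<in> F" using subfield_divide[OF F] subfield_diff[OF F] that by simp
    thus ?thesis using b by simp
  qed
  let ?b = "\<beta>^2"
  have K0: "0 \<in> K" unfolding K_def using subfield_0[OF F] by force
  have K1: "1 \<in> K" unfolding K_def using subfield_0[OF F] subfield_1[OF F] by force
  show KS: "is_subfield K" unfolding is_subfield_def
  proof (intro conjI ballI impI)
    show "0 \<in> K" by (rule K0)
    show "1 \<in> K" by (rule K1)
  next
    fix y z assume "y \<in> K" "z \<in> K"
    then obtain u v u' v' where uv: "u \<in> F" "v \<in> F" "u' \<in> F" "v' \<in> F" "y = u + v * \<beta>" "z = u' + v' * \<beta>"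
      unfolding K_def by blast
    have "y + z = (u + u') + (v + v') * \<beta>" using uv by (simp add: algebra_simps)
    thus "y + z \<in> K" unfolding K_def using uv subfield_add[OF F] by blast
    have "y - z = (u - u') + (v - v') * \<beta>" using uv by (simp add: algebra_simps)
    thus "y - z \<in> K" unfolding K_def using uv subfield_diff[OF F] by blast
    have "y * z = (u * u' + v * v' * ?b) + (u * v' + v * u') * \<beta>" using uv by (simp add: algebra_simps power2_eq_square)
    moreover have "u * u' + v * v' * ?b \<in> F" "u * v' + v * u' \<in> F"
      using uv b2 subfield_add[OF F] subfield_mult[OF F] by auto
    ultimately show "y * z \<in> K" unfolding K_def by blast
  next
    fix y assume "y \<in> K" "y \<noteq> 0"
    then obtain u v where uv: "u \<in> F" "v \<in> F" "y = u + v * \<beta>" unfolding K_def by blast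
    define N where "N = u^2 - v^2 * ?b"
    have NF: "N \<in> F" unfolding N_def using uv b2 subfield_diff[OF F] subfield_mult[OF F] subfield_power[OF F] by auto
    have N0: "N \<noteq> 0"
    proof
      assume N: "N = 0"
      hence "(u - v * \<beta>) * (u + v * \<beta>) = 0" unfolding N_def by (simp add: algebra_simps power2_eq_square)
      hence "u - v * \<beta> = 0" using uv \<open>y \<noteq> 0\<close> by simp
      hence "u + (-v) * \<beta> = 0 + 0 * \<beta>" by simp
      hence "u = 0 \<and> -v = 0" using uniq uv subfield_neg[OF F] subfield_0[OF F] by blast
      thus False using uv \<open>y \<noteq> 0\<close> by simp
    qed
    have Ny: "N = y * (u - v * \<beta>)" unfolding N_def uv(3) by (simp add: algebra_simps power2_eq_square)
    hence "inverse y = (u - v * \<beta>) / N" using N0 \<open>y \<noteq> 0\<close> by (simp add: field_simps)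
    also have "\<dots> = (u / N) + (- v / N) * \<beta>" by (simp add: diff_divide_distrib)
    finally have "inverse y = (u / N) + (- v / N) * \<beta>" .
    moreover have "u / N \<in> F" "- v / N \<in> F" using uv NF subfield_divide[OF F] subfield_neg[OF F] by auto
    ultimately show "inverse y \<in> K" unfolding K_def by blast
  qed
  define \<tau> where "\<tau> y = (SOME w. \<exists>u v. u \<in> F \<and> v \<in> F \<and> y = u + v * \<beta> \<and> w = u - v * \<beta>)" for y
  have \<tau>: "\<tau> (u + v * \<beta>) = u - v * \<beta>" if "u \<in> F" "v \<in> F" for u v
  proof -
    have "\<exists>w. \<exists>u' v'. u' \<in> F \<and> v' \<in> F \<and> u + v * \<beta> = u' + v' * \<beta> \<and> w = u' - v' * \<beta>" using that by blast
    from someI_ex[OF this] obtain u' v' where "u' \<in> F" "v' \<in> F" "u + v * \<beta> = u' + v' * \<beta>"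
      "\<tau> (u + v * \<beta>) = u' - v' * \<beta>" unfolding \<tau>_def by blast
    thus ?thesis using uniq that by metis
  qed
  have "fhom \<tau> K" unfolding fhom_def
  proof (intro conjI ballI)
    show "is_subfield K" by (rule KS)
    show "inj_on \<tau> K"
    proof (rule inj_onI)
      fix y z assume "y \<in> K" "z \<in> K" "\<tau> y = \<tau> z"
      then obtain u v u' v' where uv: "u \<in> F" "v \<in> F" "u' \<in> F" "v' \<in> F" "y = u + v * \<beta>" "z = u' + v' * \<beta>"
        and "u - v * \<beta> = u' - v' * \<beta>" unfolding K_def using \<tau> by auto
      hence "u + (-v) * \<beta> = u' + (-v') * \<beta>" by simp
      hence "u = u' \<and> -v = -v'" using uniq uv subfield_neg[OF F] by blast
      thus "y = z" using uv by simp
    qed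
  next
    fix y z assume "y \<in> K" "z \<in> K"
    then obtain u v u' v' where uv: "u \<in> F" "v \<in> F" "u' \<in> F" "v' \<in> F" "y = u + v * \<beta>" "z = u' + v' * \<beta>"
      unfolding K_def by blast
    have e: "y + z = (u + u') + (v + v') * \<beta>" using uv by (simp add: algebra_simps)
    have tyz: "\<tau> (y + z) = (u + u') - (v + v') * \<beta>" unfolding e by (rule \<tau>) (simp_all add: subfield_add[OF F] uv)
    have ty: "\<tau> y = u - v * \<beta>" using \<tau>[OF uv(1,2)] uv(5) by simp
    have tz: "\<tau> z = u' - v' * \<beta>" using \<tau>[OF uv(3,4)] uv(6) by simp
    show "\<tau> (y + z) = \<tau> y + \<tau> z" unfolding tyz ty tz by (simp add: algebra_simps)
    have e2: "y * z = (u * u' + v * v' * ?b) + (u * v' + v * u') * \<beta>" using uv by (simp add: algebra_simps power2_eq_square)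
    have "u * u' + v * v' * ?b \<in> F" "u * v' + v * u' \<in> F"
      using uv b2 subfield_add[OF F] subfield_mult[OF F] by auto
    hence tyz2: "\<tau> (y * z) = (u * u' + v * v' * ?b) - (u * v' + v * u') * \<beta>" unfolding e2 by (rule \<tau>)
    show "\<tau> (y * z) = \<tau> y * \<tau> z" unfolding tyz2 ty tz by (simp add: algebra_simps power2_eq_square)
  qed
  moreover have "\<tau> ` K \<subseteq> K"
  proof
    fix w assume "w \<in> \<tau> ` K"
    then obtain u v where uv: "u \<in> F" "v \<in> F" "w = u - v * \<beta>" unfolding K_def using \<tau> by auto
    hence "w = u + (-v) * \<beta>" by simp
    thus "w \<in> K" unfolding K_def using uv subfield_neg[OF F] by blast
  qed
  ultimately show "\<exists>\<tau>. fhom \<tau> K \<and> \<tau> ` K \<subseteq> K \<and> (\<forall>u\<in>F. \<forall>v\<in>F. \<tau> (u + v * \<beta>) = u - v * \<beta>)"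
    using \<tau> by blast
qed

lemma lt4: "x < 4 \<Longrightarrow> x = 0 \<or> x = 1 \<or> x = 2 \<or> x = (3::nat)" by auto

lemma klein_facts:
  assumes "\<pi> \<in> klein4"
  shows "\<forall>x<4. \<pi> x < 4 \<and> \<pi> (\<pi> x) = x" "(\<forall>x. \<pi> x = x) \<or> (\<forall>x<4. \<pi> x \<noteq> x)"
proof -
  have "\<pi> = perm4 [0,1,2,3] \<or> \<pi> = perm4 [1,0,3,2] \<or> \<pi> = perm4 [2,3,0,1] \<or> \<pi> = perm4 [3,2,1,0]"
    using assms unfolding klein4_def by blast
  thus "\<forall>x<4. \<pi> x < 4 \<and> \<pi> (\<pi> x) = x"
    by (auto simp: perm4_def dest!: lt4)
  from \<open>\<pi> = _ \<or> _\<close> show "(\<forall>x. \<pi> x = x) \<or> (\<forall>x<4. \<pi> x \<noteq> x)"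
  proof (elim disjE)
    assume "\<pi> = perm4 [0,1,2,3]"
    hence "\<forall>x. \<pi> x = x" by (auto simp: perm4_def dest!: lt4)
    thus ?thesis by blast
  qed (auto simp: perm4_def dest!: lt4)
qed

lemma klein_prop:
  assumes \<pi>: "\<pi> \<in> klein4" and lt: "i < 4" "j < 4" "k < 4" "l < 4" and d: "distinct [i,j,k,l]"
  shows "(\<pi> i = i \<and> \<pi> j = j) \<or> (\<pi> i = j \<and> \<pi> j = i) \<or> (\<pi> i = k \<and> \<pi> j = l) \<or> (\<pi> i = l \<and> \<pi> j = k)"
proof -
  have sub: "{i,j,k,l} \<subseteq> {0..<4}" using lt by auto
  have "card {i,j,k,l} = 4" using d by auto
  hence all: "{i,j,k,l} = {0..<4}" using sub by (metis card_atLeastLessThan card_subset_eq finite_atLeastLessThan diff_zero)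
  have inv: "\<forall>x<4. \<pi> x < 4 \<and> \<pi> (\<pi> x) = x" and fp: "(\<forall>x. \<pi> x = x) \<or> (\<forall>x<4. \<pi> x \<noteq> x)"
    using klein_facts[OF \<pi>] by auto
  show ?thesis
  proof (cases "\<forall>x. \<pi> x = x")
    case True thus ?thesis by simp
  next
    case False
    hence nf: "\<forall>x<4. \<pi> x \<noteq> x" using fp by blast
    show ?thesis
    proof (cases "\<pi> i = j")
      case True
      hence "\<pi> j = i" using inv lt by metis
      thus ?thesis using True by simp
    next
      case False
      have "\<pi> i \<in> {i,j,k,l}" using all inv lt by auto
      hence pik: "\<pi> i = k \<or> \<pi> i = l" using False nf lt by auto
      have "\<pi> j \<in> {i,j,k,l}" using all inv lt by auto
      moreover have "\<pi> j \<noteq> i" using False inv lt by metis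
      moreover have "\<pi> j \<noteq> j" using nf lt by auto
      moreover have "\<pi> j \<noteq> \<pi> i" using inv lt d by (metis distinct_length_2_or_more)
      ultimately have "\<pi> j = k \<or> \<pi> j = l" by auto
      thus ?thesis using pik \<open>\<pi> j \<noteq> \<pi> i\<close> by auto
    qed
  qed
qed


lemma klein_0: "\<pi> \<in> klein4 \<Longrightarrow> \<pi> 0 < 4"
  unfolding klein4_def perm4_def by auto
lemma klein_ex: "j < 4 \<Longrightarrow> \<exists>\<pi>\<in>klein4. \<pi> 0 = j"
proof -
  assume "j < 4"
  hence "j = 0 \<or> j = 1 \<or> j = 2 \<or> j = 3" by auto
  thus ?thesis unfolding klein4_def perm4_def by (elim disjE) (auto intro: bexI[where x="perm4 _"])
qed

context P12 begin

abbreviation "R4 \<equiv> croots g4"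
abbreviation "SF4 \<equiv> splitting_field g4"
definition "s = \<alpha> * \<beta>"

lemma aR4: "\<alpha> \<in> R4" "-\<alpha> \<in> R4" "\<beta> \<in> R4" "-\<beta> \<in> R4" using R4 by auto
lemma aSF4: "\<alpha> \<in> SF4" "\<beta> \<in> SF4" using aR4 croots_SF by blast+
lemma s_ne: "s \<noteq> 0" unfolding s_def using ab_ne by simp
lemma g4_alpha: "ev g4 \<alpha> = 0" using aR4 by (simp add: croots_ev)

lemma gal4_s: "\<sigma> \<in> galois_group g4 \<Longrightarrow> \<sigma> s = \<sigma> \<alpha> * \<sigma> \<beta>"
  unfolding s_def using fh_mult[OF gal_fhom] aSF4 by blast

lemma V4_fix_s:
  assumes T: "is_4T2 g4" and \<sigma>: "\<sigma> \<in> galois_group g4"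
  shows "\<sigma> s = s"
proof -
  obtain \<psi> where bij: "bij_betw \<psi> {0..<4} R4" and
    eq: "{restrict \<sigma> R4 | \<sigma>. \<sigma> \<in> galois_group g4} =
         {restrict (\<psi> \<circ> \<pi> \<circ> the_inv_into {0..<4} \<psi>) R4 | \<pi>. \<pi> \<in> klein4}"
    using T unfolding is_4T2_def by blast
  let ?inv = "the_inv_into {0..<4} \<psi>"
  have "restrict \<sigma> R4 \<in> {restrict (\<psi> \<circ> \<pi> \<circ> ?inv) R4 | \<pi>. \<pi> \<in> klein4}"
    using eq \<sigma> by blast
  then obtain \<pi> where \<pi>: "\<pi> \<in> klein4" and r: "restrict \<sigma> R4 = restrict (\<psi> \<circ> \<pi> \<circ> ?inv) R4" by blast
  have sx: "\<sigma> x = \<psi> (\<pi> (?inv x))" if "x \<in> R4" for x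
    using r that by (metis comp_apply restrict_apply')
  have inv_in: "?inv x < 4" if "x \<in> R4" for x
    using bij that by (metis atLeastLessThan_iff bij_betw_def the_inv_into_into subset_refl)
  have psi_inv: "\<psi> (?inv x) = x" if "x \<in> R4" for x
    using bij that by (meson f_the_inv_into_f_bij_betw)
  have inv_inj: "?inv x \<noteq> ?inv y" if "x \<in> R4" "y \<in> R4" "x \<noteq> y" for x y
    using psi_inv that by metis
  define i j k l where "i = ?inv \<alpha>" "j = ?inv \<beta>" "k = ?inv (-\<alpha>)" "l = ?inv (-\<beta>)"
  have d: "distinct [i,j,k,l]" unfolding i_j_k_l_def using inv_inj aR4 ab_ne by auto
  have lt: "i < 4" "j < 4" "k < 4" "l < 4" unfolding i_j_k_l_def using inv_in aR4 by auto
  have pv: "\<psi> i = \<alpha>" "\<psi> j = \<beta>" "\<psi> k = -\<alpha>" "\<psi> l = -\<beta>" unfolding i_j_k_l_def using psi_inv aR4 by auto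
  have sa: "\<sigma> \<alpha> = \<psi> (\<pi> i)" "\<sigma> \<beta> = \<psi> (\<pi> j)" unfolding i_j_k_l_def using sx aR4 by auto
  from klein_prop[OF \<pi> lt d] have "\<sigma> \<alpha> * \<sigma> \<beta> = \<alpha> * \<beta>"
    unfolding sa using pv by (auto simp: algebra_simps)
  thus ?thesis using gal4_s[OF \<sigma>] s_def by simp
qed

lemma b_sq_of_4T2:
  assumes T: "is_4T2 g4" shows "\<exists>r. b = r^2"
proof (cases "\<beta> \<in> Qad \<alpha>")
  case False
  let ?F = "Qad \<alpha>"
  have F: "is_subfield ?F" by (rule Qad_subfield[OF g4_irr g4_alpha])
  have b2: "\<beta>^2 \<in> ?F"
  proof -
    have "\<beta>^2 = - A - \<alpha>^2" using beta_sq alpha_sq t2_def by simp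
    thus ?thesis using F Qad_self Qad_rat subfield_diff subfield_neg subfield_power by metis
  qed
  let ?K = "{u + v * \<beta> | u v. u \<in> ?F \<and> v \<in> ?F}"
  have K: "is_subfield ?K" by (rule QEXT(1)[OF F False b2])
  obtain \<tau> where \<tau>: "fhom \<tau> ?K" "\<tau> ` ?K \<subseteq> ?K" "\<forall>u\<in>?F. \<forall>v\<in>?F. \<tau> (u + v * \<beta>) = u - v * \<beta>"
    using QEXT(2)[OF F False b2] by blast
  have F0: "0 \<in> ?F" "1 \<in> ?F" "-1 \<in> ?F" "\<alpha> \<in> ?F" "-\<alpha> \<in> ?F"
    using subfield_0[OF F] subfield_1[OF F] subfield_neg[OF F] Qad_self by auto
  have SFK: "SF4 = ?K"
  proof
    have "\<alpha> = \<alpha> + 0 * \<beta>" "-\<alpha> = -\<alpha> + 0 * \<beta>" "\<beta> = 0 + 1 * \<beta>" "-\<beta> = 0 + (-1) * \<beta>" by simp_all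
    hence "R4 \<subseteq> ?K" unfolding R4 using F0 by blast
    thus "SF4 \<subseteq> ?K" by (rule SF_min[OF K])
    have "?F \<subseteq> SF4" by (rule Qad_min[OF SF_subfield aSF4(1)])
    thus "?K \<subseteq> SF4" using aSF4(2) subfield_add[OF SF_subfield] subfield_mult[OF SF_subfield] by blast
  qed
  have "(\<lambda>x. if x \<in> SF4 then \<tau> x else x) \<in> galois_group g4"
    using GEN(2)[OF g4_ne] \<tau>(1,2) unfolding SFK by simp
  moreover define \<tau>' where "\<tau>' = (\<lambda>x. if x \<in> SF4 then \<tau> x else x)"
  ultimately have t': "\<tau>' \<in> galois_group g4" by simp
  have "\<tau>' \<alpha> = \<alpha>" using \<tau>(3) F0 aSF4 unfolding \<tau>'_def by (metis add.right_neutral mult_zero_left diff_zero)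
  moreover have "\<tau>' \<beta> = - \<beta>" using \<tau>(3) F0 aSF4 unfolding \<tau>'_def by (metis add_0 mult_1 diff_0)
  ultimately have "\<tau>' s = - s" using gal4_s[OF t'] s_def by simp
  moreover have "\<tau>' s = s" by (rule V4_fix_s[OF T t'])
  ultimately show ?thesis using s_ne by simp
next
  case True
  let ?F = "Qad \<alpha>"
  have F: "is_subfield ?F" by (rule Qad_subfield[OF g4_irr g4_alpha])
  have RF: "R4 \<subseteq> ?F" unfolding R4 using True Qad_self subfield_neg[OF F] by auto
  have "s \<in> ?F" unfolding s_def using True Qad_self subfield_mult[OF F] by auto
  then obtain p where p: "s = ev p \<alpha>" unfolding Qad_def by blast
  define p' where "p' = p mod g4"
  have vals: "ev p' x = s" if x: "x \<in> R4" for x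
  proof -
    obtain \<sigma> where \<sigma>: "\<sigma> \<in> galois_group g4" "\<forall>q. \<sigma> (ev q \<alpha>) = ev q x"
      using TRANS[OF g4_irr aR4(1) RF x] by blast
    have "ev p x = s" using \<sigma> V4_fix_s[OF T \<sigma>(1)] p by metis
    moreover have "ev g4 x = 0" using x by (simp add: croots_ev)
    ultimately show ?thesis unfolding p'_def by (simp add: ev_mod)
  qed
  define P where "P = map_poly (of_rat :: rat \<Rightarrow> complex) p' - [:s:]"
  have PR: "R4 \<subseteq> {x. poly P x = 0}" using vals unfolding P_def by (auto simp: ev_def)
  have "P = 0"
  proof (rule ccontr)
    assume P0: "P \<noteq> 0"
    have dg4: "degree g4 \<le> 4"
      by (rule degree_le) (auto simp: g4_def coeff_monom monom_0[symmetric] simp del: monom_0)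
    have "degree p' < 4 \<or> p' = 0" unfolding p'_def using degree_mod_less[OF g4_ne, of p] dg4 by auto
    hence "degree (map_poly (of_rat :: rat \<Rightarrow> complex) p') \<le> 3"
      using map_poly_degree_leq[of "of_rat :: rat \<Rightarrow> complex" p'] by auto
    hence "degree P \<le> 3" unfolding P_def using degree_diff_le[of _ 3 "[:s:]"] by auto
    moreover have "card R4 \<le> card {x. poly P x = 0}"
      by (rule card_mono[OF poly_roots_finite[OF P0] PR])
    moreover have "card {x. poly P x = 0} \<le> degree P" by (rule card_poly_roots_bound[OF P0])
    ultimately show False using card_R4 by simp
  qed
  hence "poly P 0 = 0" by simp
  hence "s = of_rat (coeff p' 0)" unfolding P_def by (simp add: poly_0_coeff_0 coeff_map_poly)
  hence "B = of_rat ((coeff p' 0)^2)" using s_sq s_def by (simp add: of_rat_power)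
  thus ?thesis by (metis of_rat_eq_iff)
qed

lemma fourT2_of_b_sq:
  assumes r: "b = r^2" shows "is_4T2 g4"
proof -
  have "s^2 = (of_rat r)^2" using s_sq s_def r by (simp add: of_rat_power)
  hence "s = of_rat r \<or> s = - of_rat r" by (simp add: power2_eq_iff)
  then obtain r' where r': "s = of_rat r'" by (metis of_rat_minus)
  let ?F = "Qad \<alpha>"
  have F: "is_subfield ?F" by (rule Qad_subfield[OF g4_irr g4_alpha])
  have bs: "\<beta> = s / \<alpha>" unfolding s_def using ab_ne by simp
  have "\<beta> \<in> ?F" unfolding bs r' using F Qad_self Qad_rat subfield_divide by metis
  hence RF: "R4 \<subseteq> ?F" unfolding R4 using Qad_self subfield_neg[OF F] by auto
  have sb: "\<sigma> \<beta> = s / \<sigma> \<alpha>" "\<sigma> (-\<alpha>) = - \<sigma> \<alpha>" "\<sigma> (-\<beta>) = - (s / \<sigma> \<alpha>)" if \<sigma>: "\<sigma> \<in> galois_group g4" for \<sigma>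
  proof -
    have h: "fhom \<sigma> SF4" by (rule gal_fhom[OF \<sigma>])
    have sSF: "s \<in> SF4" unfolding r' by (rule subfield_of_rat[OF SF_subfield])
    have "\<sigma> s = s" unfolding r' by (rule fh_of_rat[OF h])
    thus "\<sigma> \<beta> = s / \<sigma> \<alpha>" unfolding bs using fh_divide[OF h sSF aSF4(1)] by simp
    show "\<sigma> (-\<alpha>) = - \<sigma> \<alpha>" by (rule fh_neg[OF h aSF4(1)])
    show "\<sigma> (-\<beta>) = - (s / \<sigma> \<alpha>)" using fh_neg[OF h aSF4(2)] \<open>\<sigma> \<beta> = s / \<sigma> \<alpha>\<close> by simp
  qed
  define \<phi> where "\<phi> i = [\<alpha>, -\<alpha>, \<beta>, -\<beta>] ! i" for i
  have four: "{0..<4::nat} = {0,1,2,3}" by auto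
  have phiv: "\<phi> 0 = \<alpha>" "\<phi> 1 = -\<alpha>" "\<phi> 2 = \<beta>" "\<phi> 3 = -\<beta>" "\<phi> (Suc 0) = -\<alpha>" unfolding \<phi>_def by simp_all
  have bij: "bij_betw \<phi> {0..<4} R4"
    unfolding bij_betw_def inj_on_def four R4 \<phi>_def using ab_ne by auto
  let ?inv = "the_inv_into {0..<4} \<phi>"
  have invphi: "?inv (\<phi> i) = i" if "i < 4" for i
    using bij that by (simp add: bij_betw_def the_inv_into_f_f)
  have sdiv: "s / \<alpha> = \<beta>" "s / (-\<alpha>) = -\<beta>" "s / \<beta> = \<alpha>" "s / (-\<beta>) = -\<alpha>"
    unfolding s_def using ab_ne by (auto simp: field_simps)
  have KEY: "restrict \<sigma> R4 = restrict (\<phi> \<circ> \<pi> \<circ> ?inv) R4"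
    if \<sigma>: "\<sigma> \<in> galois_group g4" and \<pi>: "\<pi> \<in> klein4" and sa: "\<sigma> \<alpha> = \<phi> (\<pi> 0)" for \<sigma> \<pi>
  proof (rule restrict_ext)
    fix x assume "x \<in> R4"
    then obtain i where i: "i < 4" "x = \<phi> i" using bij by (metis atLeastLessThan_iff bij_betw_imp_surj_on imageE)
    have vals: "\<sigma> (\<phi> 0) = \<phi> (\<pi> 0)" "\<sigma> (\<phi> 1) = - \<phi> (\<pi> 0)" "\<sigma> (\<phi> 2) = s / \<phi> (\<pi> 0)" "\<sigma> (\<phi> 3) = - (s / \<phi> (\<pi> 0))"
      using sb[OF \<sigma>] sa unfolding phiv by auto
    have "i = 0 \<or> i = 1 \<or> i = 2 \<or> i = 3" using i by auto
    hence "\<sigma> (\<phi> i) = \<phi> (\<pi> i)"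
      using \<pi> vals unfolding klein4_def by (elim disjE insertE emptyE) (simp_all add: perm4_def phiv sdiv)
    thus "\<sigma> x = (\<phi> \<circ> \<pi> \<circ> ?inv) x" using i invphi by simp
  qed
  have "{restrict \<sigma> R4 | \<sigma>. \<sigma> \<in> galois_group g4} = {restrict (\<phi> \<circ> \<pi> \<circ> ?inv) R4 | \<pi>. \<pi> \<in> klein4}"
  proof (intro equalityI subsetI)
    fix y assume "y \<in> {restrict \<sigma> R4 | \<sigma>. \<sigma> \<in> galois_group g4}"
    then obtain \<sigma> where \<sigma>: "\<sigma> \<in> galois_group g4" "y = restrict \<sigma> R4" by blast
    have "\<sigma> \<alpha> \<in> R4" using gal_root[OF \<sigma>(1) aR4(1)] .
    then obtain j where j: "j < 4" "\<sigma> \<alpha> = \<phi> j" using bij by (metis atLeastLessThan_iff bij_betw_imp_surj_on imageE)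
    obtain \<pi> where \<pi>: "\<pi> \<in> klein4" "\<pi> 0 = j" using klein_ex[OF j(1)] by blast
    show "y \<in> {restrict (\<phi> \<circ> \<pi> \<circ> ?inv) R4 | \<pi>. \<pi> \<in> klein4}"
      using KEY[OF \<sigma>(1) \<pi>(1)] \<pi> j \<sigma>(2) by auto
  next
    fix y assume "y \<in> {restrict (\<phi> \<circ> \<pi> \<circ> ?inv) R4 | \<pi>. \<pi> \<in> klein4}"
    then obtain \<pi> where \<pi>: "\<pi> \<in> klein4" "y = restrict (\<phi> \<circ> \<pi> \<circ> ?inv) R4" by blast
    have "\<phi> (\<pi> 0) \<in> R4" using bij klein_0[OF \<pi>(1)] by (metis atLeastLessThan_iff bij_betw_apply zero_le)
    then obtain \<sigma> where \<sigma>: "\<sigma> \<in> galois_group g4" "\<forall>q. \<sigma> (ev q \<alpha>) = ev q (\<phi> (\<pi> 0))"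
      using TRANS[OF g4_irr aR4(1) RF] by blast
    have "\<sigma> \<alpha> = \<phi> (\<pi> 0)" using \<sigma>(2)[rule_format, of "[:0,1:]"] by simp
    hence "y = restrict \<sigma> R4" using KEY[OF \<sigma>(1) \<pi>(1)] \<pi>(2) by simp
    thus "y \<in> {restrict \<sigma> R4 | \<sigma>. \<sigma> \<in> galois_group g4}" using \<sigma>(1) by blast
  qed
  thus ?thesis unfolding is_4T2_def using card_R4 bij by blast
qed

end


lemma prod_pairs:
  fixes r :: "nat \<Rightarrow> 'a::comm_ring_1"
  shows "(\<Prod>i<n. \<Prod>j\<in>{..<n}-{i}. (r i - r j)) = (-1)^(n*(n-1) div 2) * (\<Prod>i<n. \<Prod>j\<in>{i<..<n}. (r i - r j)^2)"
proof (induction n)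
  case 0 thus ?case by simp
next
  case (Suc n)
  have L: "(\<Prod>i<Suc n. \<Prod>j\<in>{..<Suc n}-{i}. (r i - r j)) =
        (\<Prod>i<n. \<Prod>j\<in>{..<n}-{i}. (r i - r j)) * (\<Prod>i<n. (r i - r n)) * (\<Prod>j<n. (r n - r j))"
  proof -
    have 1: "{..<Suc n} - {i} = insert n ({..<n} - {i})" if "i < n" for i using that by auto
    have "(\<Prod>i<n. \<Prod>j\<in>{..<Suc n}-{i}. (r i - r j)) = (\<Prod>i<n. (r i - r n) * (\<Prod>j\<in>{..<n}-{i}. (r i - r j)))"
      by (rule prod.cong) (simp_all add: 1)
    also have "\<dots> = (\<Prod>i<n. (r i - r n)) * (\<Prod>i<n. \<Prod>j\<in>{..<n}-{i}. (r i - r j))" by (simp add: prod.distrib)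
    finally have 2: "(\<Prod>i<n. \<Prod>j\<in>{..<Suc n}-{i}. (r i - r j)) = (\<Prod>i<n. (r i - r n)) * (\<Prod>i<n. \<Prod>j\<in>{..<n}-{i}. (r i - r j))" .
    have 3: "{..<Suc n} - {n} = {..<n}" by auto
    show ?thesis by (subst prod.lessThan_Suc) (simp only: 2 3 mult_ac)
  qed
  have R: "(\<Prod>i<Suc n. \<Prod>j\<in>{i<..<Suc n}. (r i - r j)^2) = (\<Prod>i<n. \<Prod>j\<in>{i<..<n}. (r i - r j)^2) * (\<Prod>i<n. (r i - r n)^2)"
  proof -
    have 1: "{i<..<Suc n} = insert n {i<..<n}" if "i < n" for i using that by auto
    have "(\<Prod>i<n. \<Prod>j\<in>{i<..<Suc n}. (r i - r j)^2) = (\<Prod>i<n. (r i - r n)^2 * (\<Prod>j\<in>{i<..<n}. (r i - r j)^2))"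
      by (rule prod.cong) (simp_all add: 1)
    also have "\<dots> = (\<Prod>i<n. (r i - r n)^2) * (\<Prod>i<n. \<Prod>j\<in>{i<..<n}. (r i - r j)^2)" by (simp add: prod.distrib)
    finally have 2: "(\<Prod>i<n. \<Prod>j\<in>{i<..<Suc n}. (r i - r j)^2) = (\<Prod>i<n. (r i - r n)^2) * (\<Prod>i<n. \<Prod>j\<in>{i<..<n}. (r i - r j)^2)" .
    have 3: "{n<..<Suc n} = {}" by auto
    show ?thesis by (subst prod.lessThan_Suc) (simp add: 2 3 mult_ac)
  qed
  have M: "(\<Prod>i<n. (r i - r n)) * (\<Prod>j<n. (r n - r j)) = (-1)^n * (\<Prod>i<n. (r i - r n)^2)"
  proof -
    have "(\<Prod>i<n. (r i - r n)) * (\<Prod>j<n. (r n - r j)) = (\<Prod>i<n. (-1) * (r i - r n)^2)"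
      by (simp add: prod.distrib[symmetric] power2_eq_square algebra_simps)
    also have "\<dots> = (\<Prod>i<n. (-1::'a)) * (\<Prod>i<n. (r i - r n)^2)" by (rule prod.distrib)
    also have "\<dots> = (-1)^n * (\<Prod>i<n. (r i - r n)^2)" by simp
    finally show ?thesis .
  qed
  have E: "Suc n * (Suc n - 1) div 2 = n * (n - 1) div 2 + n"
  proof -
    have "Suc n * (Suc n - 1) = n * (n - 1) + 2 * n" by (cases n) (simp_all add: algebra_simps)
    thus ?thesis by simp
  qed
  show ?case unfolding L mult.assoc M Suc.IH R E by (simp add: power_add mult_ac)
qed

lemma pderiv_prod_at:
  fixes r :: "nat \<Rightarrow> complex"
  assumes "i < n"
  shows "poly (pderiv (\<Prod>j<n. [:-r j, 1:])) (r i) = (\<Prod>j\<in>{..<n}-{i}. (r i - r j))"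
proof -
  have "poly (pderiv (\<Prod>j<n. [:-r j, 1:])) (r i) = (\<Sum>a<n. \<Prod>j\<in>{..<n}-{a}. (r i - r j))"
    by (simp add: pderiv_prod poly_sum poly_prod pderiv_pCons)
  also have "\<dots> = (\<Prod>j\<in>{..<n}-{i}. (r i - r j))"
  proof (subst sum.remove[of _ i])
    show "finite {..<n}" by simp
    show "i \<in> {..<n}" using assms by simp
    have "(\<Sum>a\<in>{..<n}-{i}. \<Prod>j\<in>{..<n}-{a}. (r i - r j)) = 0"
    proof (rule sum.neutral, rule ballI)
      fix a assume "a \<in> {..<n} - {i}"
      hence "i \<in> {..<n} - {a}" using assms by auto
      thus "(\<Prod>j\<in>{..<n}-{a}. (r i - r j)) = 0" by (intro prod_zero) auto
    qed
    thus "(\<Prod>j\<in>{..<n}-{i}. (r i - r j)) + (\<Sum>a\<in>{..<n}-{i}. \<Prod>j\<in>{..<n}-{a}. (r i - r j)) =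
      (\<Prod>j\<in>{..<n}-{i}. (r i - r j))" by simp
  qed
  finally show ?thesis .
qed

context P12 begin

lemma mf: "map_poly (of_rat :: rat \<Rightarrow> complex) f = monom 1 12 + monom A 6 + [:B:]"
  unfolding f_def by (simp add: map_poly_of_rat_add map_poly_monom monom_0[symmetric] del: monom_0)

lemma coeff_f12: "coeff f 12 = 1" by (simp add: f_def coeff_monom monom_0[symmetric] del: monom_0)
lemma degree_f: "degree f = 12"
proof (rule antisym)
  show "degree f \<le> 12" by (rule degree_le) (auto simp: f_def coeff_monom monom_0[symmetric] simp del: monom_0)
  show "12 \<le> degree f" using coeff_f12 by (simp add: le_degree)
qed
lemma lc_f: "lead_coeff f = 1" using coeff_f12 degree_f by simp

lemma poly_mf: "poly (map_poly (of_rat :: rat \<Rightarrow> complex) f) x = x^12 + A * x^6 + B"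
  using ev_f by (simp add: ev_def)

lemma pderiv_mf: "poly (pderiv (map_poly (of_rat :: rat \<Rightarrow> complex) f)) x = 12 * x^11 + 6 * A * x^5"
  unfolding mf by (simp add: pderiv_add pderiv_monom poly_monom pderiv_pCons)

lemma ex_rs: "\<exists>rs. map_poly (of_rat :: rat \<Rightarrow> complex) f = smult (of_rat (lead_coeff f)) (\<Prod>r\<leftarrow>rs. [:-r, 1:])"
proof -
  let ?P = "map_poly (of_rat :: rat \<Rightarrow> complex) f"
  obtain rs where rs: "mset rs = proots ?P" using ex_mset by blast
  have "lead_coeff ?P = of_rat (lead_coeff f)"
    by (simp add: degree_map_poly coeff_map_poly)
  moreover have "smult (lead_coeff ?P) (\<Prod>x\<in>#proots ?P. [:-x, 1:]) = ?P"
    by (rule complex_poly_decompose_multiset)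
  moreover have "(\<Prod>x\<in>#proots ?P. [:-x, 1:]) = (\<Prod>x\<leftarrow>rs. [:-x, 1:])"
    by (subst prod_mset_prod_list [symmetric]) (simp add: rs)
  ultimately show ?thesis by metis
qed

lemma prod_roots_6:
  fixes r :: "nat \<Rightarrow> complex"
  assumes P: "\<And>x. (\<Prod>i<12. (x - r i)) = x^12 + A * x^6 + B"
  shows "(\<Prod>i<12. (2 * r i ^ 6 + A)) = (4 * B - A^2)^6"
proof -
  define c where "c = - A / 2"
  obtain u where u: "u^6 = c" using nth_root_exists[of 6 c] by auto
  have u6: "2 * u^6 = - A" using u c_def by simp
  have fac: "2 * x^6 + A = 2 * (((u - x) * (u*zeta - x) * (u*zeta^2 - x)) * ((-u - x) * (-u*zeta - x) * (-u*zeta^2 - x)))" for x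
  proof -
    have f1: "(u - x) * (u*zeta - x) * (u*zeta^2 - x) = u^3 - x^3" using zeta(1) by algebra
    have f2: "(-u - x) * (-u*zeta - x) * (-u*zeta^2 - x) = -(u^3) - x^3" using zeta(1) by algebra
    have "(u^3 - x^3) * (-(u^3) - x^3) = x^6 - u^6" by algebra
    moreover have "2 * x^6 + A = 2 * (x^6 - u^6)" using u6 by (simp add: algebra_simps)
    ultimately show ?thesis unfolding f1 f2 by simp
  qed
  have z6: "zeta^6 = 1" "(zeta^2)^6 = 1"
  proof -
    show "zeta^6 = 1" using zeta(2) power_mult[of zeta 3 2] by simp
    have "(zeta^2)^6 = (zeta^3)^4" by (simp only: power_mult[symmetric]) simp
    thus "(zeta^2)^6 = 1" using zeta(2) by simp
  qed
  have v6: "(u*zeta)^6 = c" "(u*zeta^2)^6 = c" "(-u)^6 = c" "(-u*zeta)^6 = c" "(-u*zeta^2)^6 = c"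
    using u z6 by (simp_all add: power_mult_distrib)
  have ev: "(\<Prod>i<12. (v - r i)) = c^2 + A * c + B" if "v^6 = c" for v
  proof -
    have "v^12 = (v^6)^2" by (simp only: power_mult[symmetric]) simp
    thus ?thesis using P[of v] that by simp
  qed
  have "(\<Prod>i<12. (2 * r i ^ 6 + A)) = (\<Prod>i<12. 2 * (((u - r i) * (u*zeta - r i) * (u*zeta^2 - r i)) * ((-u - r i) * (-u*zeta - r i) * (-u*zeta^2 - r i))))"
    using fac by simp
  also have "\<dots> = (\<Prod>i<12::nat. 2) * (((\<Prod>i<12. (u - r i)) * (\<Prod>i<12. (u*zeta - r i)) * (\<Prod>i<12. (u*zeta^2 - r i))) * ((\<Prod>i<12. (-u - r i)) * (\<Prod>i<12. (-u*zeta - r i)) * (\<Prod>i<12. (-u*zeta^2 - r i))))"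
    by (simp only: prod.distrib)
  also have "\<dots> = 2^12 * (c^2 + A * c + B)^6"
  proof -
    have k6: "K*K*K*(K*K*K) = K^6" for K :: complex by algebra
    show ?thesis unfolding ev[OF u] ev[OF v6(1)] ev[OF v6(2)] ev[OF v6(3)] ev[OF v6(4)] ev[OF v6(5)] k6
      by simp
  qed
  also have "\<dots> = (4 * B - A^2)^6"
  proof -
    have e: "4 * (c^2 + A * c + B) = 4 * B - A^2" unfolding c_def by (simp add: field_simps power2_eq_square)
    have "(2::complex)^12 * (c^2 + A * c + B)^6 = (4 * (c^2 + A * c + B))^6" by (simp only: power_mult_distrib) simp
    thus ?thesis unfolding e .
  qed
  finally show ?thesis .
qed

lemma disc_f: "disc f = of_rat (6^12 * b^5 * (4 * b - a^2)^6)"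
proof -
  let ?P = "map_poly (of_rat :: rat \<Rightarrow> complex) f"
  define rs where "rs = (SOME rs. ?P = smult (of_rat (lead_coeff f)) (\<Prod>r\<leftarrow>rs. [:-r, 1:]))"
  have rs: "?P = smult (of_rat (lead_coeff f)) (\<Prod>r\<leftarrow>rs. [:-r, 1:])"
    unfolding rs_def by (rule someI_ex[OF ex_rs])
  define n where "n = length rs"
  define r where "r i = rs ! i" for i
  have Pr: "?P = (\<Prod>i<n. [:-r i, 1:])"
    using rs unfolding lc_f n_def r_def by (simp add: prod.list_conv_set_nth atLeast0LessThan)
  have "degree ?P = n" unfolding Pr by (subst degree_prod_sum_eq) auto
  hence n12: "n = 12" by (simp add: degree_map_poly degree_f)
  have Px: "(\<Prod>i<12. (x - r i)) = x^12 + A * x^6 + B" for x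
    using poly_mf[of x] unfolding Pr n12 by (simp add: poly_prod)
  have "disc f = of_rat (lead_coeff f) ^ (2 * n - 2) * (\<Prod>i<n. \<Prod>j\<in>{i<..<n}. (rs ! i - rs ! j)^2)"
    unfolding disc_def Let_def rs_def[symmetric] n_def ..
  also have "\<dots> = (\<Prod>i<12. \<Prod>j\<in>{i<..<12}. (r i - r j)^2)"
    unfolding lc_f n12 r_def by simp
  also have "\<dots> = (\<Prod>i<12. \<Prod>j\<in>{..<12}-{i}. (r i - r j))"
    using prod_pairs[where n=12 and r=r] by simp
  also have "\<dots> = (\<Prod>i<12. 12 * r i ^ 11 + 6 * A * r i ^ 5)"
  proof (rule prod.cong)
    fix i assume "i \<in> {..<12::nat}"
    hence "(\<Prod>j\<in>{..<12}-{i}. (r i - r j)) = poly (pderiv ?P) (r i)"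
      using pderiv_prod_at[of i 12 r] unfolding Pr n12 by simp
    thus "(\<Prod>j\<in>{..<12}-{i}. (r i - r j)) = 12 * r i ^ 11 + 6 * A * r i ^ 5" by (simp add: pderiv_mf)
  qed simp
  also have "\<dots> = (\<Prod>i<12. 6 * (r i ^ 5 * (2 * r i ^ 6 + A)))"
    by (rule prod.cong) (simp_all add: algebra_simps power_add[symmetric])
  also have "\<dots> = 6^12 * (\<Prod>i<12. r i)^5 * (\<Prod>i<12. (2 * r i ^ 6 + A))"
    by (simp add: prod.distrib prod_power_distrib)
  also have "(\<Prod>i<12. r i) = B"
  proof -
    have "(\<Prod>i<12. (0 - r i)) = B" using Px[of 0] by simp
    moreover have "(\<Prod>i<12. (0 - r i)) = (\<Prod>i<12::nat. (-1::complex)) * (\<Prod>i<12. r i)"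
      by (subst prod.distrib[symmetric]) simp
    ultimately show ?thesis by simp
  qed
  also have "(\<Prod>i<12. (2 * r i ^ 6 + A)) = (4 * B - A^2)^6" by (rule prod_roots_6[OF Px])
  finally show ?thesis by (simp add: of_rat_mult of_rat_power of_rat_diff)
qed

lemma disc_part: "(\<exists>q. disc f = of_rat (q^2)) \<longleftrightarrow> (\<exists>r. b = r^2)"
proof
  assume "\<exists>q. disc f = of_rat (q^2)"
  then obtain q where "disc f = of_rat (q^2)" by blast
  hence q: "6^12 * b^5 * (4 * b - a^2)^6 = q^2" using disc_f by (metis of_rat_eq_iff)
  define X where "X = 6^6 * b^2 * (4 * b - a^2)^3"
  have X0: "X \<noteq> 0" unfolding X_def using b_ne disc_ne by auto
  have gen: "bb * (6^6 * bb^2 * Y^3)^2 = 6^12 * bb^5 * Y^6" for bb Y :: rat by algebra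
  have "b * X^2 = q^2" using q gen[of b "4 * b - a^2"] unfolding X_def by simp
  hence "b = (q / X)^2" using X0 by (simp add: field_simps power_divide)
  thus "\<exists>r. b = r^2" by blast
next
  assume "\<exists>r. b = r^2"
  then obtain r where r: "b = r^2" by blast
  have "6^12 * b^5 * (4 * b - a^2)^6 = (6^6 * r^5 * (4 * b - a^2)^3)^2"
    unfolding r by (simp add: power_mult_distrib power_mult[symmetric])
  thus "\<exists>q. disc f = of_rat (q^2)" using disc_f by metis
qed

theorem main_result:
  "((\<exists>q::rat. disc f = of_rat (q ^ 2)) \<longleftrightarrow> is_4T2 g4)
   \<and> card (galois_group f) \<le> min (18 * card (galois_group g4)) (4 * card (galois_group g6))"
  using disc_part b_sq_of_4T2 fourT2_of_b_sq bound1 bound2 by auto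

end


theorem lemma3p1:
  fixes a b :: rat
  assumes irr: "irreducible (monom 1 12 + monom a 6 + [:b:])"
  shows "((\<exists>q::rat. disc (monom 1 12 + monom a 6 + [:b:]) = of_rat (q ^ 2))
            \<longleftrightarrow> is_4T2 (monom 1 4 + monom a 2 + [:b:]))
       \<and> card (galois_group (monom 1 12 + monom a 6 + [:b:]))
           \<le> min (18 * card (galois_group (monom 1 4 + monom a 2 + [:b:])))
                  (4 * card (galois_group (monom 1 6 + monom a 3 + [:b:])))"
  proof -
  interpret P12 a b using irr by unfold_locales
  show ?thesis using main_result unfolding f_def g4_def g6_def .
qed

end
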